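(* The bijections $\psi:\mathrm{revSSYT}\to\mathrm{qKT}^{(1)}$ and $\Gamma:\mathrm{revSSYT}\to\mathcal{A}\mathrm{SSF}$ restrict to bijections $\mathrm{HrevSSYT}\to\mathrm{HqKT}^{(1)}$ and $\mathrm{HrevSSYT}\to\mathrm{HSSF}$ respectively.
   Context: $\mathrm{revSSYT}$: reverse semistandard Young tableaux of all partition shapes (English notation; positive integer entries; rows weakly decrease left to right, columns strictly decrease top to bottom). For a weak composition $a$, $D(a)$ has $a_i$ left-justified boxes in row $i$, row 1 lowest. Quasi-key tableau of shape $a$: filling of $D(a)$ with positive integers such that (1) rows weakly decrease and no entry of row $i$ exceeds $i$; (2) column entries distinct, increasing going up the first column; (3) if $i$ is above $k$ in a column with $i<k$, there is an entry $j>i$ immediately right of $k$; (4) for two rows with the higher strictly longer, an entry $i$ in column $c$ of the lower and $j$ in column $c+1$ of the higher satisfy $i<j$. $\mathrm{qKT}^{(1)}$: all quasi-key tableaux (all shapes) with first-column entries equal to row indices. Triples of $D(a)$ (rows $r<s$): Type A: $\gamma=(r,c),\alpha=(r,c+1),\beta=(s,c+1)$, $a_r\ge a_s$; Type B: $\gamma=(s,c),\alpha=(s,c+1),\beta=(r,c)$, $a_s>a_r$; inversion triple: $\beta>\gamma\ge\alpha$ or $\gamma\ge\alpha>\beta$. $\mathcal{A}\mathrm{SSF}$: all fillings of skyline diagrams $D(a)$ (all $a$) with positive integers, rows weakly decreasing, distinct column entries, all triples inversion triples, first-column entry of each nonempty row $i$ equal to $i$. $\psi$ (right row-filling): with column sets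 $C_1,C_2,\ldots$ of $V$, repeatedly let $k$ be the largest index with $C_k\neq\emptyset$, choose the smallest $y_k\in C_k$, then for $c=k-1,\ldots,1$ the smallest $y_c\in C_c$ with $y_c\ge y_{c+1}$; make $(y_1,\ldots,y_k)$ row $y_1$ of the output and delete these elements; it is known to be a bijection onto $\mathrm{qKT}^{(1)}$. $\Gamma$ (column-filling): column 1 of $\Gamma(V)$ places each entry $i$ of column 1 of $V$ in row $i$; given column $c$, the entries of column $c+1$ of $V$ are placed in decreasing order, each in the lowest row that has an entry in column $c$ weakly larger than it and an unfilled position in column $c+1$; it is known to be a bijection $\mathrm{revSSYT}\to\mathcal{A}\mathrm{SSF}$. A filling $X$ (in any of these three sets) is particle-highest if for every entry value $i$ of $X$, the leftmost occurrence of $i$ is in the first column of $X$ or lies in a column weakly left of some occurrence of $j$, where $j$ is the smallest entry of $X$ larger than $i$. $\mathrm{HrevSSYT}$, $\mathrm{HqKT}^{(1)}$, $\mathrm{HSSF}$ denote the particle-highest elements of $\mathrm{revSSYT}$, $\mathrm{qKT}^{(1)}$, $\mathcal{A}\mathrm{SSF}$. *)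

theory Defs
  imports Main
begin

text \<open>A tableau V is a list of rows, top row first (English notation);
  row r (0-indexed in the list) is a list of its entries from left to right.\<close>

definition revSSYT :: "nat list list set" where
  "revSSYT = {V.
     (\<forall>row\<in>set V. row \<noteq> [] \<and> (\<forall>x\<in>set row. 0 < x) \<and> sorted_wrt (\<lambda>a b. b \<le> a) row) \<and>
     sorted_wrt (\<lambda>a b. b \<le> a) (map length V) \<and>
     (\<forall>r j. Suc r < length V \<and> j < length (V ! Suc r) \<longrightarrow> V ! Suc r ! j < V ! r ! j)}"

text \<open>Column c (1-indexed) of a tableau, read top to bottom.\<close>
definition colV :: "nat list list \<Rightarrow> nat \<Rightarrow> nat list" where
  "colV V c = [V ! r ! (c - 1). r \<leftarrow> [0..<length V], c \<le> length (V ! r)]"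

definition colset :: "nat list list \<Rightarrow> nat \<Rightarrow> nat set" where
  "colset V c = set (colV V c)"

definition width :: "nat list list \<Rightarrow> nat" where
  "width V = (if V = [] then 0 else length (hd V))"

text \<open>A filling F of a skyline diagram D(a) is a list of rows, row 1 (the lowest)
  first: F ! (i-1) is row i read left to right, and a_i = length (F ! (i-1)).
  Different weak compositions differing only by trailing zeros are identified by
  requiring the last listed row to be nonempty.\<close>

definition slen :: "nat list list \<Rightarrow> nat \<Rightarrow> nat" where
  "slen F i = (if 1 \<le> i \<and> i \<le> length F then length (F ! (i - 1)) else 0)"

definition incell :: "nat list list \<Rightarrow> nat \<Rightarrow> nat \<Rightarrow> bool" where
  "incell F i c \<longleftrightarrow> 1 \<le> c \<and> c \<le> slen F i"

definition ent :: "nat list list \<Rightarrow> nat \<Rightarrow> nat \<Rightarrow> nat" where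
  "ent F i c = F ! (i - 1) ! (c - 1)"

definition skyline_ok :: "nat list list \<Rightarrow> bool" where
  "skyline_ok F \<longleftrightarrow> F = [] \<or> last F \<noteq> []"

definition qKT1 :: "nat list list set" where
  "qKT1 = {F. skyline_ok F \<and>
     \<comment> \<open>(1) positive entries, rows weakly decrease, entries of row i at most i\<close>
     (\<forall>i c. incell F i c \<longrightarrow> 0 < ent F i c \<and> ent F i c \<le> i) \<and>
     (\<forall>i c. 1 \<le> c \<and> incell F i (c + 1) \<longrightarrow> ent F i (c + 1) \<le> ent F i c) \<and>
     \<comment> \<open>(2) distinct column entries, first column increasing upwards\<close>
     (\<forall>i i' c. incell F i c \<and> incell F i' c \<and> i \<noteq> i' \<longrightarrow> ent F i c \<noteq> ent F i' c) \<and>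
     (\<forall>i i'. incell F i 1 \<and> incell F i' 1 \<and> i < i' \<longrightarrow> ent F i 1 < ent F i' 1) \<and>
     \<comment> \<open>(3) entry at (s,c) above entry at (r,c), r < s, smaller: needs larger entry right of lower one\<close>
     (\<forall>r s c. r < s \<and> incell F r c \<and> incell F s c \<and> ent F s c < ent F r c \<longrightarrow>
        incell F r (c + 1) \<and> ent F s c < ent F r (c + 1)) \<and>
     \<comment> \<open>(4) higher row strictly longer\<close>
     (\<forall>r s c. r < s \<and> slen F r < slen F s \<and> incell F r c \<and> incell F s (c + 1) \<longrightarrow>
        ent F r c < ent F s (c + 1)) \<and>
     \<comment> \<open>first-column entries equal row indices\<close>
     (\<forall>i. incell F i 1 \<longrightarrow> ent F i 1 = i)}"

definition inversion_triple :: "nat \<Rightarrow> nat \<Rightarrow> nat \<Rightarrow> bool" where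
  "inversion_triple \<gamma> \<alpha> \<beta> \<longleftrightarrow> (\<beta> > \<gamma> \<and> \<gamma> \<ge> \<alpha>) \<or> (\<gamma> \<ge> \<alpha> \<and> \<alpha> > \<beta>)"

definition ASSF :: "nat list list set" where
  "ASSF = {F. skyline_ok F \<and>
     (\<forall>i c. incell F i c \<longrightarrow> 0 < ent F i c) \<and>
     (\<forall>i c. 1 \<le> c \<and> incell F i (c + 1) \<longrightarrow> ent F i (c + 1) \<le> ent F i c) \<and>
     (\<forall>i i' c. incell F i c \<and> incell F i' c \<and> i \<noteq> i' \<longrightarrow> ent F i c \<noteq> ent F i' c) \<and>
     \<comment> \<open>type A triples: gamma=(r,c), alpha=(r,c+1), beta=(s,c+1), r<s, a_r \<ge> a_s\<close>
     (\<forall>r s c. r < s \<and> 1 \<le> c \<and> slen F s \<le> slen F r \<and> incell F s (c + 1) \<longrightarrow>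
        inversion_triple (ent F r c) (ent F r (c + 1)) (ent F s (c + 1))) \<and>
     \<comment> \<open>type B triples: gamma=(s,c), alpha=(s,c+1), beta=(r,c), r<s, a_s > a_r\<close>
     (\<forall>r s c. r < s \<and> slen F r < slen F s \<and> incell F r c \<longrightarrow>
        inversion_triple (ent F s c) (ent F s (c + 1)) (ent F r c)) \<and>
     (\<forall>i. incell F i 1 \<longrightarrow> ent F i 1 = i)}"

text \<open>Occurrences (column, value) of entries of a filling (works for both
  representations: columns are positions within rows, 1-indexed).\<close>
definition occs :: "nat list list \<Rightarrow> (nat \<times> nat) set" where
  "occs X = {(c, v). \<exists>r < length X. 1 \<le> c \<and> c \<le> length (X ! r) \<and> X ! r ! (c - 1) = v}"

definition vals :: "nat list list \<Rightarrow> nat set" where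
  "vals X = snd ` occs X"

definition particle_highest :: "nat list list \<Rightarrow> bool" where
  "particle_highest X \<longleftrightarrow> (\<forall>i \<in> vals X.
     let c0 = Min {c. (c, i) \<in> occs X} in
     c0 = 1 \<or> ({v \<in> vals X. i < v} \<noteq> {} \<and>
               (\<exists>c'. (c', Min {v \<in> vals X. i < v}) \<in> occs X \<and> c0 \<le> c')))"

definition HrevSSYT :: "nat list list set" where
  "HrevSSYT = {V \<in> revSSYT. particle_highest V}"

definition HqKT1 :: "nat list list set" where
  "HqKT1 = {F \<in> qKT1. particle_highest F}"

definition HSSF :: "nat list list set" where
  "HSSF = {F \<in> ASSF. particle_highest F}"

text \<open>chain takes the nonempty column sets in reverse order C_k, ..., C_1 and a lower
  bound b, returning y_k, ..., y_1 with y_c the least element of C_c that is \<ge> y_(c+1).\<close>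
fun chain :: "nat set list \<Rightarrow> nat \<Rightarrow> nat list" where
  "chain [] b = []"
| "chain (C # Cs) b = (let y = Min {x \<in> C. b \<le> x} in y # chain Cs y)"

definition trim :: "nat set list \<Rightarrow> nat set list" where
  "trim cs = rev (dropWhile (\<lambda>C. C = {}) (rev cs))"

definition psi_step :: "nat set list \<times> (nat \<times> nat list) list \<Rightarrow> nat set list \<times> (nat \<times> nat list) list" where
  "psi_step st = (let cs = trim (fst st) in
     if cs = [] then (cs, snd st)
     else let row = rev (chain (rev cs) 0) in
       (map (\<lambda>(C, y). C - {y}) (zip cs row), (hd row, row) # snd st))"

definition sky_of_pairs :: "(nat \<times> nat list) list \<Rightarrow> nat list list" where
  "sky_of_pairs ps = map (\<lambda>i. case map_of ps i of None \<Rightarrow> [] | Some row \<Rightarrow> row)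
       [1..<Max (insert 0 (fst ` set ps)) + 1]"

definition psi :: "nat list list \<Rightarrow> nat list list" where
  "psi V = sky_of_pairs (snd ((psi_step ^^ sum_list (map length V))
             (map (colset V) [1..<width V + 1], [])))"

text \<open>Placing x into column c+1: the lowest row whose row has length exactly c
  (has an entry in column c and column c+1 still unfilled) with column-c entry \<ge> x.\<close>
definition gplace :: "nat \<Rightarrow> (nat \<Rightarrow> nat list) \<Rightarrow> nat \<Rightarrow> (nat \<Rightarrow> nat list)" where
  "gplace c g x = (let r = (LEAST r. length (g r) = c \<and> x \<le> last (g r)) in g(r := g r @ [x]))"

definition Gamma :: "nat list list \<Rightarrow> nat list list" where
  "Gamma V = (let g0 = (\<lambda>r. if r \<in> set (colV V 1) then [r] else []);
                  g = foldl (\<lambda>g c. foldl (gplace c) g (rev (sort (colV V (c + 1))))) g0 [1..<width V];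
                  R = Max (insert 0 (set (colV V 1)))
              in map g [1..<R + 1])"

end

theory Submission
  imports Defs
begin

definition kap :: "nat list list \<Rightarrow> nat \<Rightarrow> nat set" where
  "kap F c = {ent F i c | i. incell F i c}"

definition basic :: "nat list list \<Rightarrow> bool" where
  "basic X \<longleftrightarrow> (\<forall>i c. incell X i c \<longrightarrow> 0 < ent X i c) \<and>
     (\<forall>i c. 1 \<le> c \<and> incell X i (c + 1) \<longrightarrow> ent X i (c + 1) \<le> ent X i c) \<and>
     (\<forall>i i' c. incell X i c \<and> incell X i' c \<and> i \<noteq> i' \<longrightarrow> ent X i c \<noteq> ent X i' c)"

definition domin :: "nat set \<Rightarrow> nat set \<Rightarrow> bool" where
  "domin A B \<longleftrightarrow> (\<forall>t. card {x\<in>B. t \<le> x} \<le> card {x\<in>A. t \<le> x})"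

lemma incell_bounds: "incell X i c \<Longrightarrow> 1 \<le> i \<and> i \<le> length X \<and> 1 \<le> c"
  unfolding incell_def slen_def by (auto split: if_splits)

lemma incell_left: "incell X i c \<Longrightarrow> 1 \<le> c' \<Longrightarrow> c' \<le> c \<Longrightarrow> incell X i c'"
  unfolding incell_def by auto

lemma kap_finite: "finite (kap X c)"
proof -
  have "kap X c \<subseteq> (\<lambda>i. ent X i c) ` {1..length X}"
    unfolding kap_def using incell_bounds by fastforce
  then show ?thesis using finite_surj by blast
qed


lemma card_mono_filter:
  fixes f g :: "'a \<Rightarrow> nat"
  assumes "finite A" "inj_on g R" "\<And>r. r \<in> R \<Longrightarrow> f r \<le> g r" "\<And>r. r\<in>R \<Longrightarrow> g r \<in> A"
    "{x\<in>B. t \<le> x} \<subseteq> f ` {r\<in>R. t \<le> f r}" "finite R"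
  shows "card {x\<in>B. t \<le> x} \<le> card {x\<in>A. t \<le> x}"
proof -
  have f1: "finite {r\<in>R. t \<le> f r}" using assms(6) by simp
  have "card {x\<in>B. t \<le> x} \<le> card (f ` {r\<in>R. t \<le> f r})"
    using assms(5) f1 by (intro card_mono) auto
  also have "\<dots> \<le> card {r\<in>R. t \<le> f r}" by (rule card_image_le) (rule f1)
  also have "\<dots> = card (g ` {r\<in>R. t \<le> f r})"
  proof -
    have "inj_on g {r\<in>R. t \<le> f r}" using assms(2) by (rule inj_on_subset) auto
    then show ?thesis by (simp add: card_image)
  qed
  also have "\<dots> \<le> card {x\<in>A. t \<le> x}"
  proof (rule card_mono)
    show "finite {x\<in>A. t \<le> x}" using assms(1) by simp
    show "g ` {r\<in>R. t \<le> f r} \<subseteq> {x\<in>A. t \<le> x}"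
      using assms(3,4) le_trans by blast
  qed
  finally show ?thesis .
qed

lemma incell_fin: "finite {i. incell X i c}"
  by (rule finite_subset[of _ "{1..length X}"]) (auto dest: incell_bounds)

lemma basic_domin:
  assumes "basic X" "1 \<le> c"
  shows "domin (kap X c) (kap X (Suc c))"
  unfolding domin_def
proof
  fix t
  let ?R = "{i. incell X i (Suc c)}"
  have lft: "\<And>i. incell X i (Suc c) \<Longrightarrow> incell X i c"
    using incell_left[of X _ "Suc c" c] assms(2) by simp
  show "card {x \<in> kap X (Suc c). t \<le> x} \<le> card {x \<in> kap X c. t \<le> x}"
  proof (rule card_mono_filter[where R="?R" and f="\<lambda>i. ent X i (Suc c)" and g="\<lambda>i. ent X i c"])
    show "finite (kap X c)" by (rule kap_finite)
    show "inj_on (\<lambda>i. ent X i c) ?R"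
      using assms(1) lft unfolding inj_on_def basic_def by blast
    show "\<And>r. r \<in> ?R \<Longrightarrow> ent X r (Suc c) \<le> ent X r c"
      using assms unfolding basic_def by auto
    show "\<And>r. r \<in> ?R \<Longrightarrow> ent X r c \<in> kap X c"
      using lft unfolding kap_def by auto
    show "{x \<in> kap X (Suc c). t \<le> x} \<subseteq> (\<lambda>i. ent X i (Suc c)) ` {r \<in> ?R. t \<le> ent X r (Suc c)}"
      unfolding kap_def by auto
  qed (rule incell_fin)
qed


lemma slen_in: "1 \<le> i \<Longrightarrow> i \<le> length F \<Longrightarrow> slen F i = length (F ! (i - 1))"
  unfolding slen_def by simp

lemma slen_out: "\<not> (1 \<le> i \<and> i \<le> length F) \<Longrightarrow> slen F i = 0"
  unfolding slen_def by auto

lemma incell_iff: "incell F i c \<longleftrightarrow> 1 \<le> c \<and> 1 \<le> i \<and> i \<le> length F \<and> c \<le> length (F ! (i - 1))"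
  unfolding incell_def slen_def by auto

lemma skyeq:
  assumes "skyline_ok F" "skyline_ok G"
    and inc: "\<And>i c. incell F i c \<longleftrightarrow> incell G i c"
    and en: "\<And>i c. incell F i c \<Longrightarrow> ent F i c = ent G i c"
  shows "F = G"
proof -
  have sl: "slen F i = slen G i" for i
  proof (rule ccontr)
    assume ne: "slen F i \<noteq> slen G i"
    show False
    proof (cases "slen F i < slen G i")
      case True
      then have "incell G i (slen G i)" unfolding incell_def by simp
      moreover have "\<not> incell F i (slen G i)" using True unfolding incell_def by simp
      ultimately show False using inc by blast
    next
      case False
      then have lt: "slen G i < slen F i" using ne by simp
      then have "incell F i (slen F i)" unfolding incell_def by simp
      moreover have "\<not> incell G i (slen F i)" using lt unfolding incell_def by simp
      ultimately show False using inc by blast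
    qed
  qed
  have lenle: "length X \<le> length Y" if "skyline_ok X" "\<And>i. slen X i = slen Y i" for X Y :: "nat list list"
  proof (rule ccontr)
    assume "\<not> length X \<le> length Y"
    then have lt: "length Y < length X" by simp
    then have "X \<noteq> []" by auto
    then have "last X \<noteq> []" using that(1) unfolding skyline_ok_def by simp
    then have "slen X (length X) \<noteq> 0" using lt \<open>X \<noteq> []\<close>
      by (simp add: slen_def last_conv_nth)
    moreover have "slen Y (length X) = 0" using lt by (simp add: slen_def)
    ultimately show False using that(2) by simp
  qed
  have len: "length F = length G"
    using lenle[of F G] lenle[of G F] sl assms(1,2) by (simp add: le_antisym)
  show ?thesis
  proof (rule nth_equalityI)
    show "length F = length G" by (rule len)
    fix k assume k: "k < length F"
    have l: "length (F ! k) = length (G ! k)"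
      using sl[of "Suc k"] k len by (simp add: slen_def)
    show "F ! k = G ! k"
    proof (rule nth_equalityI)
      show "length (F ! k) = length (G ! k)" by (rule l)
      fix m assume m: "m < length (F ! k)"
      have "incell F (Suc k) (Suc m)" using k m by (simp add: incell_iff)
      then have "ent F (Suc k) (Suc m) = ent G (Suc k) (Suc m)" by (rule en)
      then show "F ! k ! m = G ! k ! m" by (simp add: ent_def)
    qed
  qed
qed

lemma occs_kap: "occs X = {(c, v). 1 \<le> c \<and> v \<in> kap X c}"
proof (rule set_eqI, clarify)
  fix c v
  show "((c, v) \<in> occs X) = ((c, v) \<in> {(c, v). 1 \<le> c \<and> v \<in> kap X c})"
  proof
    assume "(c, v) \<in> occs X"
    then obtain r where r: "r < length X" "1 \<le> c" "c \<le> length (X ! r)" "X ! r ! (c - 1) = v"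
      unfolding occs_def by auto
    then have "incell X (Suc r) c" by (simp add: incell_iff)
    moreover have "ent X (Suc r) c = v" using r by (simp add: ent_def)
    ultimately show "(c, v) \<in> {(c, v). 1 \<le> c \<and> v \<in> kap X c}" using r unfolding kap_def by blast
  next
    assume "(c, v) \<in> {(c, v). 1 \<le> c \<and> v \<in> kap X c}"
    then obtain i where i: "incell X i c" "ent X i c = v" unfolding kap_def by auto
    then have "i - 1 < length X" "1 \<le> c" "c \<le> length (X ! (i - 1))" "X ! (i - 1) ! (c - 1) = v"
      by (auto simp: incell_iff ent_def)
    then show "(c, v) \<in> occs X" unfolding occs_def by blast
  qed
qed

lemma ph_cong:
  assumes "\<And>c. 1 \<le> c \<Longrightarrow> kap X c = kap Y c"
  shows "particle_highest X = particle_highest Y"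
proof -
  have "occs X = occs Y" unfolding occs_kap using assms by auto
  then show ?thesis unfolding particle_highest_def vals_def by simp
qed

lemma colset_kap: "1 \<le> c \<Longrightarrow> colset V c = kap V c"
proof (rule set_eqI)
  fix x assume c: "1 \<le> c"
  show "x \<in> colset V c \<longleftrightarrow> x \<in> kap V c"
  proof
    assume "x \<in> colset V c"
    then obtain r where r: "r < length V" "c \<le> length (V ! r)" "x = V ! r ! (c - 1)"
      unfolding colset_def colV_def by auto
    then have "incell V (Suc r) c" "ent V (Suc r) c = x" using c by (auto simp: incell_iff ent_def)
    then show "x \<in> kap V c" unfolding kap_def by blast
  next
    assume "x \<in> kap V c"
    then obtain i where i: "incell V i c" "ent V i c = x" unfolding kap_def by auto
    then have "i - 1 < length V" "c \<le> length (V ! (i - 1))" "x = V ! (i - 1) ! (c - 1)"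
      by (auto simp: incell_iff ent_def)
    then show "x \<in> colset V c" unfolding colset_def colV_def by auto
  qed
qed


lemma rs_len:
  assumes "V \<in> revSSYT" "r \<le> r'" "r' < length V"
  shows "length (V ! r') \<le> length (V ! r)"
proof (cases "r = r'")
  case False
  then have "r < r'" using assms(2) by simp
  moreover have "sorted_wrt (\<lambda>a b. b \<le> a) (map length V)" using assms(1) unfolding revSSYT_def by simp
  ultimately show ?thesis using assms(3) by (auto simp: sorted_wrt_iff_nth_less)
qed simp

lemma rs_col:
  assumes "V \<in> revSSYT" "r < r'" "r' < length V" "c < length (V ! r')"
  shows "V ! r' ! c < V ! r ! c"
  using assms(2-4)
proof (induction r')
  case 0
  then show ?case by simp
next
  case (Suc r'')
  have cc: "\<forall>r j. Suc r < length V \<and> j < length (V ! Suc r) \<longrightarrow> V ! Suc r ! j < V ! r ! j"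
    using assms(1) unfolding revSSYT_def by simp
  have step: "V ! Suc r'' ! c < V ! r'' ! c" using cc Suc.prems by blast
  show ?case
  proof (cases "r = r''")
    case True
    then show ?thesis using step by simp
  next
    case False
    then have "r < r''" using Suc.prems by simp
    moreover have "c < length (V ! r'')"
      using rs_len[OF assms(1), of r'' "Suc r''"] Suc.prems by simp
    ultimately have "V ! r'' ! c < V ! r ! c" using Suc.IH Suc.prems by simp
    then show ?thesis using step by simp
  qed
qed

lemma rs_incell_up:
  assumes "V \<in> revSSYT" "incell V i' c" "1 \<le> i" "i \<le> i'"
  shows "incell V i c"
proof -
  have "i - 1 \<le> i' - 1" "i' - 1 < length V" using assms by (auto simp: incell_iff)
  then have "length (V ! (i' - 1)) \<le> length (V ! (i - 1))" using rs_len[OF assms(1)] by blast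
  then show ?thesis using assms by (auto simp: incell_iff)
qed

lemma rs_ent_lt:
  assumes "V \<in> revSSYT" "incell V i' c" "1 \<le> i" "i < i'"
  shows "ent V i' c < ent V i c"
  using assms rs_col[OF assms(1), of "i - 1" "i' - 1" "c - 1"] by (auto simp: incell_iff ent_def)

lemma rs_basic:
  assumes "V \<in> revSSYT"
  shows "basic V"
proof -
  have rows: "\<forall>row\<in>set V. row \<noteq> [] \<and> (\<forall>x\<in>set row. 0 < x) \<and> sorted_wrt (\<lambda>a b. b \<le> a) row"
    using assms unfolding revSSYT_def by simp
  have pos: "0 < ent V i c" if "incell V i c" for i c
  proof -
    have "V ! (i - 1) \<in> set V" using that by (auto simp: incell_iff)
    moreover have "V ! (i - 1) ! (c - 1) \<in> set (V ! (i - 1))" using that by (auto simp: incell_iff)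
    ultimately show ?thesis using rows by (auto simp: ent_def)
  qed
  have dec: "ent V i (c + 1) \<le> ent V i c" if "1 \<le> c" "incell V i (c + 1)" for i c
  proof -
    have "V ! (i - 1) \<in> set V" using that by (auto simp: incell_iff)
    then have "sorted_wrt (\<lambda>a b. b \<le> a) (V ! (i - 1))" using rows by simp
    then show ?thesis using that by (auto simp: incell_iff ent_def sorted_wrt_iff_nth_less)
  qed
  have dis: "ent V i c \<noteq> ent V i' c" if "incell V i c" "incell V i' c" "i \<noteq> i'" for i i' c
  proof (cases "i < i'")
    case True
    then show ?thesis using rs_ent_lt[OF assms that(2)] that(1) incell_bounds by fastforce
  next
    case False
    then have "i' < i" using that(3) by simp
    then show ?thesis using rs_ent_lt[OF assms that(1)] that(2) incell_bounds by fastforce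
  qed
  show ?thesis unfolding basic_def using pos dec dis by blast
qed

lemma rs_skyline: "V \<in> revSSYT \<Longrightarrow> skyline_ok V"
  unfolding revSSYT_def skyline_ok_def by auto

lemma rs_count:
  assumes "V \<in> revSSYT" "incell V i c"
  shows "card {y \<in> kap V c. ent V i c \<le> y} = i"
proof -
  have ib: "1 \<le> i" using assms(2) incell_bounds by blast
  have "{y \<in> kap V c. ent V i c \<le> y} = (\<lambda>i'. ent V i' c) ` {1..i}"
  proof (rule set_eqI)
    fix y
    show "y \<in> {y \<in> kap V c. ent V i c \<le> y} \<longleftrightarrow> y \<in> (\<lambda>i'. ent V i' c) ` {1..i}"
    proof
      assume "y \<in> {y \<in> kap V c. ent V i c \<le> y}"
      then obtain i' where i': "incell V i' c" "y = ent V i' c" "ent V i c \<le> y" unfolding kap_def by auto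
      have "i' \<le> i"
      proof (rule ccontr)
        assume "\<not> i' \<le> i"
        then have "ent V i' c < ent V i c" using rs_ent_lt[OF assms(1) i'(1) ib] by simp
        then show False using i' by simp
      qed
      moreover have "1 \<le> i'" using i'(1) incell_bounds by blast
      ultimately show "y \<in> (\<lambda>i'. ent V i' c) ` {1..i}" using i'(2) by auto
    next
      assume "y \<in> (\<lambda>i'. ent V i' c) ` {1..i}"
      then obtain i' where i': "1 \<le> i'" "i' \<le> i" "y = ent V i' c" by auto
      have inc: "incell V i' c" using rs_incell_up[OF assms i'(1,2)] .
      have "ent V i c \<le> y"
        using rs_ent_lt[OF assms(1,2) i'(1)] i' by (cases "i' = i") auto
      then show "y \<in> {y \<in> kap V c. ent V i c \<le> y}" using inc i' unfolding kap_def by blast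
    qed
  qed
  moreover have "inj_on (\<lambda>i'. ent V i' c) {1..i}"
  proof (rule inj_onI)
    fix a b assume ab: "a \<in> {1..i}" "b \<in> {1..i}" "ent V a c = ent V b c"
    have "incell V a c" "incell V b c" using rs_incell_up[OF assms] ab by auto
    then show "a = b" using rs_basic[OF assms(1)] ab(3) unfolding basic_def by blast
  qed
  ultimately show ?thesis by (simp add: card_image)
qed

lemma rs_unique:
  assumes "V \<in> revSSYT" "W \<in> revSSYT" "\<And>c. 1 \<le> c \<Longrightarrow> kap V c = kap W c"
  shows "V = W"
proof -
  have one: "incell Y i c \<and> ent Y i c = ent X i c"
    if XY: "X \<in> revSSYT" "Y \<in> revSSYT" "\<And>c. 1 \<le> c \<Longrightarrow> kap X c = kap Y c" and inc: "incell X i c"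
    for X Y i c
  proof -
    have c1: "1 \<le> c" using inc incell_bounds by blast
    have "ent X i c \<in> kap Y c" using XY(3)[OF c1] inc unfolding kap_def by blast
    then obtain i' where i': "incell Y i' c" "ent Y i' c = ent X i c" unfolding kap_def by auto
    have "i' = card {y \<in> kap Y c. ent Y i' c \<le> y}" using rs_count[OF XY(2) i'(1)] by simp
    also have "\<dots> = card {y \<in> kap X c. ent X i c \<le> y}" using XY(3)[OF c1] i'(2) by simp
    also have "\<dots> = i" using rs_count[OF XY(1) inc] .
    finally show ?thesis using i' by simp
  qed
  show ?thesis
  proof (rule skyeq)
    show "skyline_ok V" "skyline_ok W" using assms rs_skyline by auto
    show "incell V i c \<longleftrightarrow> incell W i c" for i c
      using one[OF assms(1,2,3)] one[OF assms(2,1)] assms(3) by metis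
    show "incell V i c \<Longrightarrow> ent V i c = ent W i c" for i c
      using one[OF assms(1,2,3)] by metis
  qed
qed

lemma concat_if_map: "concat (map (\<lambda>r. if P r then [f r] else []) xs) = map f (filter P xs)"
  by (induction xs) auto

lemma colV_map: "colV V c = map (\<lambda>r. V ! r ! (c - 1)) (filter (\<lambda>r. c \<le> length (V ! r)) [0..<length V])"
  unfolding colV_def by (simp add: concat_if_map)


lemma rs_colset_empty:
  assumes V: "V \<in> revSSYT" and c: "width V < c"
  shows "colset V c = {}"
proof -
  have "\<not> c \<le> length (V ! r)" if "r < length V" for r
  proof -
    have "length (V ! r) \<le> length (V ! 0)" using rs_len[OF V, of 0 r] that by simp
    moreover have "V \<noteq> []" using that by auto
    then have "width V = length (V ! 0)" unfolding width_def by (simp add: hd_conv_nth)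
    ultimately show ?thesis using c by simp
  qed
  then show ?thesis unfolding colset_def colV_def by auto
qed


definition nl :: "nat set \<Rightarrow> nat \<Rightarrow> nat" where
  "nl S r = rev (sorted_list_of_set S) ! r"

lemma desc_list:
  assumes "finite S"
  shows "sorted_wrt (>) (rev (sorted_list_of_set S))" "length (rev (sorted_list_of_set S)) = card S"
    "set (rev (sorted_list_of_set S)) = S"
  using assms by (auto simp: sorted_wrt_rev)

lemma desc_nth_le:
  fixes xs :: "nat list"
  assumes "sorted_wrt (>) xs" "j < length xs" "r < length xs"
  shows "xs ! r \<le> xs ! j \<longleftrightarrow> j \<le> r"
proof
  assume "xs ! r \<le> xs ! j"
  then show "j \<le> r" using assms sorted_wrt_nth_less[OF assms(1), of r j] by (cases "j \<le> r") auto
next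
  assume "j \<le> r"
  then show "xs ! r \<le> xs ! j" using assms sorted_wrt_nth_less[OF assms(1), of j r] by (cases "j = r") auto
qed

lemma nl_in: "finite S \<Longrightarrow> r < card S \<Longrightarrow> nl S r \<in> S"
  unfolding nl_def using desc_list[of S] by (metis nth_mem)

lemma nl_lt: "finite S \<Longrightarrow> r < r' \<Longrightarrow> r' < card S \<Longrightarrow> nl S r' < nl S r"
  unfolding nl_def using desc_list[of S] sorted_wrt_nth_less by metis

lemma nl_img: "finite S \<Longrightarrow> nl S ` {..<card S} = S"
proof -
  assume f: "finite S"
  let ?xs = "rev (sorted_list_of_set S)"
  have "set ?xs = {?xs ! i | i. i < length ?xs}" by (rule set_conv_nth)
  also have "\<dots> = nl S ` {..<card S}" unfolding nl_def using desc_list(2)[OF f] by auto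
  finally show ?thesis using desc_list(3)[OF f] by simp
qed

lemma nl_count_le:
  assumes f: "finite S" and r: "r < card S"
  shows "card {x \<in> S. nl S r \<le> x} = Suc r"
proof -
  let ?xs = "rev (sorted_list_of_set S)"
  have d: "sorted_wrt (>) ?xs" "length ?xs = card S" "set ?xs = S" using desc_list[OF f] by auto
  have "{x \<in> S. nl S r \<le> x} = (\<lambda>j. ?xs ! j) ` {..r}"
  proof (rule set_eqI)
    fix x
    show "x \<in> {x \<in> S. nl S r \<le> x} \<longleftrightarrow> x \<in> (\<lambda>j. ?xs ! j) ` {..r}"
    proof
      assume "x \<in> {x \<in> S. nl S r \<le> x}"
      then have xin: "x \<in> set ?xs" "?xs ! r \<le> x" using d by (auto simp: nl_def)
      then obtain j where "j < length ?xs" "x = ?xs ! j" using in_set_conv_nth[of x ?xs] by metis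
      with xin have "j < length ?xs" "x = ?xs ! j" "?xs ! r \<le> x" by auto
      then show "x \<in> (\<lambda>j. ?xs ! j) ` {..r}" using desc_nth_le[OF d(1)] d r by auto
    next
      assume "x \<in> (\<lambda>j. ?xs ! j) ` {..r}"
      then obtain j where jj: "j \<le> r" "x = ?xs ! j" by auto
      have "?xs ! j \<in> S" using nl_in[OF f, of j] jj r by (simp add: nl_def)
      then show "x \<in> {x \<in> S. nl S r \<le> x}" using desc_nth_le[OF d(1), of j r] d r jj
        by (auto simp: nl_def)
    qed
  qed
  moreover have "inj_on (\<lambda>j. ?xs ! j) {..r}"
  proof -
    have "distinct ?xs" by simp
    then show ?thesis using d r by (auto simp: inj_on_def nth_eq_iff_index_eq)
  qed
  ultimately show ?thesis by (simp add: card_image)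
qed

lemma nl_count_lt:
  assumes f: "finite S" and r: "r < card S"
  shows "card {x \<in> S. nl S r < x} = r"
proof -
  have "{x \<in> S. nl S r \<le> x} = insert (nl S r) {x \<in> S. nl S r < x}"
    using nl_in[OF f r] by auto
  moreover have "nl S r \<notin> {x \<in> S. nl S r < x}" by simp
  moreover have "finite {x \<in> S. nl S r < x}" using f by simp
  ultimately show ?thesis using nl_count_le[OF f r] by simp
qed

lemma domin_card: "domin A B \<Longrightarrow> card B \<le> card A"
  unfolding domin_def by (drule spec[of _ 0]) simp

lemma nl_domin:
  assumes fA: "finite A" and fB: "finite B" and dm: "domin A B" and r: "r < card B"
  shows "nl B r \<le> nl A r"
proof (rule ccontr)
  assume "\<not> nl B r \<le> nl A r"
  then have lt: "nl A r < nl B r" by simp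
  have rA: "r < card A" using domin_card[OF dm] r by simp
  have "Suc r = card {x \<in> B. nl B r \<le> x}" using nl_count_le[OF fB r] by simp
  also have "\<dots> \<le> card {x \<in> A. nl B r \<le> x}" using dm unfolding domin_def by blast
  also have "\<dots> \<le> card {x \<in> A. nl A r < x}"
    using fA lt by (intro card_mono) auto
  also have "\<dots> = r" using nl_count_lt[OF fA rA] .
  finally show False by simp
qed

lemma exists_rs:
  fixes K :: "nat \<Rightarrow> nat set"
  assumes fin: "\<And>c. finite (K c)" and pos: "\<And>c x. x \<in> K c \<Longrightarrow> 0 < x"
    and dm: "\<And>c. 1 \<le> c \<Longrightarrow> domin (K c) (K (Suc c))"
    and bd: "\<And>c. w < c \<Longrightarrow> K c = {}"
  shows "\<exists>V\<in>revSSYT. \<forall>c\<ge>1. kap V c = K c"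
proof -
  have mono1: "card (K c') \<le> card (K c)" if "1 \<le> c" "c \<le> c'" for c c'
    using that(2,1)
  proof (induction c' rule: dec_induct)
    case base then show ?case by simp
  next
    case (step n)
    then show ?case using domin_card[OF dm[of n]] by simp
  qed
  define l where "l r = (LEAST c. card (K (Suc c)) \<le> r)" for r
  have lprop: "c \<le> l r \<longleftrightarrow> r < card (K c)" if "1 \<le> c" for c r
  proof
    assume "c \<le> l r"
    show "r < card (K c)"
    proof (rule ccontr)
      assume "\<not> r < card (K c)"
      then have "card (K (Suc (c - 1))) \<le> r" using that by simp
      then have "l r \<le> c - 1" unfolding l_def by (rule Least_le)
      then show False using \<open>c \<le> l r\<close> that by simp
    qed
  next
    assume a: "r < card (K c)"
    show "c \<le> l r"
    proof (rule ccontr)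
      assume "\<not> c \<le> l r"
      have ex: "card (K (Suc w)) \<le> r" using bd[of "Suc w"] by simp
      have "card (K (Suc (l r))) \<le> r" unfolding l_def by (rule LeastI[of _ w]) (rule ex)
      moreover have "card (K c) \<le> card (K (Suc (l r)))" using mono1 \<open>\<not> c \<le> l r\<close> by simp
      ultimately show False using a by simp
    qed
  qed
  define V where "V = map (\<lambda>r. map (\<lambda>j. nl (K (Suc j)) r) [0..<l r]) [0..<card (K 1)]"
  have lenV: "length V = card (K 1)" unfolding V_def by simp
  have Vr: "V ! r = map (\<lambda>j. nl (K (Suc j)) r) [0..<l r]" if "r < card (K 1)" for r
    unfolding V_def using that by simp
  have lenVr: "length (V ! r) = l r" if "r < card (K 1)" for r using Vr[OF that] by simp
  have Vrj: "V ! r ! j = nl (K (Suc j)) r" if "r < card (K 1)" "j < l r" for r j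
    using Vr[OF that(1)] that(2) by simp
  have jin: "r < card (K (Suc j))" if "j < l r" for r j using lprop[of "Suc j" r] that by simp
  have rowdec: "nl (K (Suc j)) r \<le> nl (K (Suc i)) r" if "i \<le> j" "r < card (K (Suc j))" for i j r
    using that
  proof (induction j)
    case 0 then show ?case by simp
  next
    case (Suc j)
    have r1: "r < card (K (Suc j))" using Suc.prems(2) mono1[of "Suc j" "Suc (Suc j)"] by simp
    have st: "nl (K (Suc (Suc j))) r \<le> nl (K (Suc j)) r"
      using nl_domin[OF fin fin dm[of "Suc j"] Suc.prems(2)] by simp
    show ?case
    proof (cases "i = Suc j")
      case True then show ?thesis by simp
    next
      case False
      then have "i \<le> j" using Suc.prems by simp
      then show ?thesis using Suc.IH r1 st by simp
    qed
  qed
  have rowsok: "row \<noteq> [] \<and> (\<forall>x\<in>set row. 0 < x) \<and> sorted_wrt (\<lambda>a b. b \<le> a) row"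
    if rin: "row \<in> set V" for row
  proof -
    obtain r where r: "r < card (K 1)" "row = V ! r" using lenV rin by (auto simp: in_set_conv_nth)
    have "1 \<le> l r" using lprop[of 1 r] r by simp
    then have A: "row \<noteq> []" using r lenVr[OF r(1)] by auto
    have B: "\<forall>x\<in>set row. 0 < x"
    proof
      fix x assume "x \<in> set row"
      then obtain j where j: "j < l r" "x = nl (K (Suc j)) r" using r Vr by auto
      then show "0 < x" using nl_in[OF fin jin[OF j(1)]] pos by blast
    qed
    have C: "sorted_wrt (\<lambda>a b. b \<le> a) row"
      unfolding sorted_wrt_iff_nth_less
    proof (intro allI impI)
      fix i j assume ij: "i < j" "j < length row"
      then have "j < l r" using r lenVr by simp
      then show "row ! j \<le> row ! i" using r Vrj ij rowdec jin by simp
    qed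
    show ?thesis using A B C by blast
  qed
  have lensorted: "sorted_wrt (\<lambda>a b. b \<le> a) (map length V)"
    unfolding sorted_wrt_iff_nth_less
  proof (intro allI impI)
    fix i j assume ij: "i < j" "j < length (map length V)"
    then have j: "j < card (K 1)" "i < card (K 1)" using lenV by auto
    have "l j \<le> l i"
    proof (cases "l j = 0")
      case False
      then have "j < card (K (l j))" using lprop[of "l j" j] by simp
      then have "i < card (K (l j))" using ij by simp
      then show ?thesis using lprop[of "l j" i] False by simp
    qed simp
    then show "map length V ! j \<le> map length V ! i" using j lenVr lenV by simp
  qed
  have colok: "V ! Suc r ! j < V ! r ! j" if a: "Suc r < length V \<and> j < length (V ! Suc r)" for r j
  proof -
    have r: "Suc r < card (K 1)" "j < l (Suc r)" using a lenV lenVr by auto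
    have jr: "j < l r"
    proof -
      have "Suc r < card (K (Suc j))" using jin[OF r(2)] .
      then have "r < card (K (Suc j))" by simp
      then show ?thesis using lprop[of "Suc j" r] by simp
    qed
    show ?thesis
      using Vrj[OF r] Vrj[OF _ jr] r nl_lt[OF fin, of r "Suc r"] jin[OF r(2)] by simp
  qed
  have VR: "V \<in> revSSYT"
    unfolding revSSYT_def using rowsok lensorted colok by blast
  have "kap V c = K c" if c: "1 \<le> c" for c
  proof (rule set_eqI)
    fix x
    show "x \<in> kap V c \<longleftrightarrow> x \<in> K c"
    proof
      assume "x \<in> kap V c"
      then obtain i where i: "incell V i c" "x = ent V i c" unfolding kap_def by auto
      then have b: "1 \<le> i" "i - 1 < card (K 1)" "c \<le> l (i - 1)"
        using lenV lenVr by (auto simp: incell_iff)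
      have "Suc (c - 1) = c" using c by simp
      then have "x = nl (K c) (i - 1)" using i Vrj[of "i - 1" "c - 1"] b by (simp add: ent_def)
      then show "x \<in> K c" using nl_in[OF fin] lprop[OF c] b by simp
    next
      assume "x \<in> K c"
      then obtain r where r: "r < card (K c)" "x = nl (K c) r" using nl_img[OF fin[of c]] by auto
      have rl: "c \<le> l r" using lprop[OF c] r by simp
      have r1: "r < card (K 1)" using r mono1[OF _ c] by fastforce
      have "incell V (Suc r) c" using c rl r1 lenV lenVr by (simp add: incell_iff)
      moreover have "ent V (Suc r) c = x"
        using Vrj[OF r1, of "c - 1"] rl c r by (simp add: ent_def)
      ultimately show "x \<in> kap V c" unfolding kap_def by blast
    qed
  qed
  then show ?thesis using VR by blast
qed

lemma basic_exists_rs: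
  assumes "basic F"
  shows "\<exists>V\<in>revSSYT. \<forall>c\<ge>1. kap V c = kap F c"
proof (rule exists_rs)
  show "finite (kap F c)" for c by (rule kap_finite)
  show "0 < x" if "x \<in> kap F c" for c x using that assms unfolding kap_def basic_def by auto
  show "domin (kap F c) (kap F (Suc c))" if "1 \<le> c" for c using basic_domin[OF assms that] .
  show "kap F c = {}" if "sum_list (map length F) < c" for c
  proof -
    have "\<not> incell F i c" for i
    proof
      assume "incell F i c"
      then have "c \<le> length (F ! (i - 1))" "F ! (i - 1) \<in> set F" by (auto simp: incell_iff)
      moreover have "length (F ! (i - 1)) \<le> sum_list (map length F)"
        using calculation(2) by (simp add: member_le_sum_list)
      ultimately show False using that by simp
    qed
    then show ?thesis unfolding kap_def by auto
  qed
qed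


lemma assf_basic: "F \<in> ASSF \<Longrightarrow> basic F"
  unfolding ASSF_def basic_def by simp
lemma assf_A: "F \<in> ASSF \<Longrightarrow> \<forall>r s c. r < s \<and> 1 \<le> c \<and> slen F s \<le> slen F r \<and> incell F s (c + 1) \<longrightarrow>
        inversion_triple (ent F r c) (ent F r (c + 1)) (ent F s (c + 1))"
  unfolding ASSF_def mem_Collect_eq by (elim conjE)
lemma assf_B: "F \<in> ASSF \<Longrightarrow> \<forall>r s c. r < s \<and> slen F r < slen F s \<and> incell F r c \<longrightarrow>
        inversion_triple (ent F s c) (ent F s (c + 1)) (ent F r c)"
  unfolding ASSF_def mem_Collect_eq by (elim conjE)
lemma assf_fc: "F \<in> ASSF \<Longrightarrow> \<forall>i. incell F i 1 \<longrightarrow> ent F i 1 = i"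
  unfolding ASSF_def mem_Collect_eq by (elim conjE)
lemma assf_sky: "F \<in> ASSF \<Longrightarrow> skyline_ok F"
  unfolding ASSF_def mem_Collect_eq by (elim conjE)

lemma assf_P:
  assumes F: "F \<in> ASSF" and rs: "r < s" and c: "1 \<le> c" and ins: "incell F s (c + 1)"
    and inr: "incell F r c" and le: "ent F s (c + 1) \<le> ent F r c"
  shows "incell F r (c + 1) \<and> ent F s (c + 1) < ent F r (c + 1)"
proof -
  note tA = assf_A[OF F] and tB = assf_B[OF F] and fc = assf_fc[OF F]
  show ?thesis
  proof (cases "slen F s \<le> slen F r")
    case True
    have "incell F r (c + 1)" using True ins unfolding incell_def by simp
    moreover have "inversion_triple (ent F r c) (ent F r (c + 1)) (ent F s (c + 1))"
      using tA rs c True ins by blast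
    ultimately show ?thesis using le unfolding inversion_triple_def by auto
  next
    case False
    then have lt: "slen F r < slen F s" by simp
    have "ent F r c' < ent F s c'" if "1 \<le> c'" "c' \<le> slen F r" for c'
      using that
    proof (induction c')
      case 0 then show ?case by simp
    next
      case (Suc c')
      show ?case
      proof (cases "c' = 0")
        case True
        have "incell F r 1" "incell F s 1" using Suc.prems lt unfolding incell_def by auto
        then show ?thesis using fc rs True by simp
      next
        case False
        then have ih: "ent F r c' < ent F s c'" using Suc by simp
        have ir: "incell F r c'" using Suc.prems False unfolding incell_def by simp
        have "inversion_triple (ent F s c') (ent F s (c' + 1)) (ent F r c')"
          using tB rs lt ir by blast
        then have "ent F r c' < ent F s (c' + 1)" using ih unfolding inversion_triple_def by auto
        moreover have "ent F r (Suc c') \<le> ent F r c'"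
          using assf_basic[OF F] Suc.prems False unfolding basic_def incell_def by auto
        ultimately show ?thesis by simp
      qed
    qed
    then have "ent F r c < ent F s c" using inr c unfolding incell_def by simp
    moreover have "inversion_triple (ent F s c) (ent F s (c + 1)) (ent F r c)"
      using tB rs lt inr by blast
    ultimately have "ent F r c < ent F s (c + 1)" unfolding inversion_triple_def by auto
    then show ?thesis using le by simp
  qed
qed

lemma col1_kap:
  assumes "\<forall>i. incell F i 1 \<longrightarrow> ent F i 1 = i"
  shows "incell F i 1 \<longleftrightarrow> i \<in> kap F 1"
proof
  assume "incell F i 1" then show "i \<in> kap F 1" using assms unfolding kap_def by force
next
  assume "i \<in> kap F 1"
  then obtain i' where "incell F i' 1" "ent F i' 1 = i" unfolding kap_def by auto
  then show "incell F i 1" using assms by auto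
qed

lemma skyeq2:
  assumes "length F = length G"
    and inc: "\<And>i c. incell F i c \<longleftrightarrow> incell G i c"
    and en: "\<And>i c. incell F i c \<Longrightarrow> ent F i c = ent G i c"
  shows "F = G"
proof (rule nth_equalityI)
  show "length F = length G" by (rule assms(1))
  fix k assume k: "k < length F"
  have l: "length (F ! k) = length (G ! k)"
  proof (rule ccontr)
    assume ne: "length (F ! k) \<noteq> length (G ! k)"
    show False
    proof (cases "length (F ! k) < length (G ! k)")
      case True
      then have "incell G (Suc k) (length (G ! k))" "\<not> incell F (Suc k) (length (G ! k))"
        using k assms(1) by (auto simp: incell_iff)
      then show False using inc by blast
    next
      case False
      then have "length (G ! k) < length (F ! k)" using ne by simp
      then have "incell F (Suc k) (length (F ! k))" "\<not> incell G (Suc k) (length (F ! k))"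
        using k assms(1) by (auto simp: incell_iff)
      then show False using inc by blast
    qed
  qed
  show "F ! k = G ! k"
  proof (rule nth_equalityI)
    show "length (F ! k) = length (G ! k)" by (rule l)
    fix m assume m: "m < length (F ! k)"
    have "incell F (Suc k) (Suc m)" using k m by (simp add: incell_iff)
    then have "ent F (Suc k) (Suc m) = ent G (Suc k) (Suc m)" by (rule en)
    then show "F ! k ! m = G ! k ! m" by (simp add: ent_def)
  qed
qed

lemma skyeq_len:
  assumes "skyline_ok F" "skyline_ok G" "\<forall>i. slen F i = slen G i"
  shows "length F = length G"
proof -
  have lenle: "length X \<le> length Y" if "skyline_ok X" "\<And>i. slen X i = slen Y i" for X Y :: "nat list list"
  proof (rule ccontr)
    assume "\<not> length X \<le> length Y"
    then have lt: "length Y < length X" by simp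
    then have "X \<noteq> []" by auto
    then have "last X \<noteq> []" using that(1) unfolding skyline_ok_def by simp
    then have "slen X (length X) \<noteq> 0" using lt \<open>X \<noteq> []\<close>
      by (simp add: slen_def last_conv_nth)
    moreover have "slen Y (length X) = 0" using lt by (simp add: slen_def)
    ultimately show False using that(2) by simp
  qed
  show ?thesis using lenle[of F G] lenle[of G F] assms by (simp add: le_antisym)
qed

lemma assf_unique:
  assumes F: "F \<in> ASSF" and G: "G \<in> ASSF" and K: "\<And>c. 1 \<le> c \<Longrightarrow> kap F c = kap G c"
  shows "F = G"
proof -
  note fcF = assf_fc[OF F] and fcG = assf_fc[OF G]
  have bF: "basic F" using assf_basic[OF F] .
  have bG: "basic G" using assf_basic[OF G] .
  have ag: "\<forall>i. (incell F i c \<longleftrightarrow> incell G i c) \<and> (incell F i c \<longrightarrow> ent F i c = ent G i c)"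
    if "1 \<le> c" for c
    using that
  proof (induction c rule: dec_induct)
    case base
    have "incell F i 1 \<longleftrightarrow> incell G i 1" for i
      using col1_kap[OF fcF, of i] col1_kap[OF fcG, of i] K[of 1] by simp
    then show ?case using fcF fcG by simp
  next
    case (step c)
    note agc = step.IH
    let ?K = "kap F (Suc c)"
    have finK: "finite ?K" by (rule kap_finite)
    have key: "\<And>x i i'. card {y \<in> ?K. x < y} = n \<Longrightarrow> incell F i (Suc c) \<Longrightarrow> ent F i (Suc c) = x
        \<Longrightarrow> incell G i' (Suc c) \<Longrightarrow> ent G i' (Suc c) = x \<Longrightarrow> i = i'" for n
    proof (induction n rule: less_induct)
      case (less n x i i')
      have smaller: "card {z \<in> ?K. y < z} < n" if "y \<in> ?K" "x < y" for y
      proof -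
        have "{z \<in> ?K. y < z} \<subset> {z \<in> ?K. x < z}" using that by auto
        moreover have "finite {z \<in> ?K. x < z}" using finK by simp
        ultimately have "card {z \<in> ?K. y < z} < card {z \<in> ?K. x < z}" by (rule psubset_card_mono[rotated])
        then show ?thesis using less.prems(1) by simp
      qed
      define QF where "QF r \<longleftrightarrow> incell F r c \<and> x \<le> ent F r c \<and> \<not> (incell F r (Suc c) \<and> x < ent F r (Suc c))" for r
      define QG where "QG r \<longleftrightarrow> incell G r c \<and> x \<le> ent G r c \<and> \<not> (incell G r (Suc c) \<and> x < ent G r (Suc c))" for r
      have least: "(LEAST r. Q r) = j"
        if H: "H \<in> ASSF" and Q: "\<And>r. Q r \<longleftrightarrow> incell H r c \<and> x \<le> ent H r c \<and> \<not> (incell H r (Suc c) \<and> x < ent H r (Suc c))"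
          and j: "incell H j (Suc c)" "ent H j (Suc c) = x" for H Q j
      proof (rule Least_equality)
        have "incell H j c" using j(1) step.hyps incell_left[of H j "Suc c" c] by simp
        moreover have "x \<le> ent H j c" using assf_basic[OF H] j step.hyps unfolding basic_def by force
        ultimately show "Q j" using Q j by simp
      next
        fix r assume "Q r"
        then have qr: "incell H r c" "x \<le> ent H r c" "\<not> (incell H r (Suc c) \<and> x < ent H r (Suc c))" using Q by auto
        show "j \<le> r"
        proof (rule ccontr)
          assume "\<not> j \<le> r"
          then have "r < j" by simp
          from assf_P[OF H this step.hyps(1)] j qr(1,2) qr(3) show False by simp
        qed
      qed
      have "QF r \<longleftrightarrow> QG r" for r
      proof -
        have "(incell F r (Suc c) \<and> x < ent F r (Suc c)) \<longleftrightarrow> (incell G r (Suc c) \<and> x < ent G r (Suc c))"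
        proof
          assume a: "incell F r (Suc c) \<and> x < ent F r (Suc c)"
          let ?y = "ent F r (Suc c)"
          have yK: "?y \<in> ?K" using a unfolding kap_def by blast
          then have "?y \<in> kap G (Suc c)" using K[of "Suc c"] by simp
          then obtain r' where r': "incell G r' (Suc c)" "ent G r' (Suc c) = ?y" unfolding kap_def by auto
          have "r = r'" using less.IH[OF smaller[OF yK] refl] a r' by blast
          then show "incell G r (Suc c) \<and> x < ent G r (Suc c)" using r' a by simp
        next
          assume a: "incell G r (Suc c) \<and> x < ent G r (Suc c)"
          let ?y = "ent G r (Suc c)"
          have "?y \<in> kap G (Suc c)" using a unfolding kap_def by blast
          then have yK: "?y \<in> ?K" using K[of "Suc c"] by simp
          then obtain r' where r': "incell F r' (Suc c)" "ent F r' (Suc c) = ?y" unfolding kap_def by auto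
          have "r' = r" using less.IH[OF smaller[OF yK] refl] a r' by blast
          then show "incell F r (Suc c) \<and> x < ent F r (Suc c)" using r' a by simp
        qed
        then show ?thesis unfolding QF_def QG_def using agc by auto
      qed
      then have "QF = QG" by auto
      moreover have "(LEAST r. QF r) = i" by (rule least[OF F QF_def less.prems(2,3)])
      moreover have "(LEAST r. QG r) = i'" by (rule least[OF G QG_def less.prems(4,5)])
      ultimately show ?case by simp
    qed
    have "incell G i (Suc c) \<and> ent G i (Suc c) = ent F i (Suc c)" if "incell F i (Suc c)" for i
    proof -
      have "ent F i (Suc c) \<in> kap G (Suc c)" using that K[of "Suc c"] unfolding kap_def by auto
      then obtain i' where i': "incell G i' (Suc c)" "ent G i' (Suc c) = ent F i (Suc c)" unfolding kap_def by auto
      have "i = i'" by (rule key[OF refl that refl i'])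
      then show ?thesis using i' by simp
    qed
    moreover have "incell F i (Suc c)" if "incell G i (Suc c)" for i
    proof -
      have "ent G i (Suc c) \<in> ?K" using that K[of "Suc c"] unfolding kap_def by auto
      then obtain i' where i': "incell F i' (Suc c)" "ent F i' (Suc c) = ent G i (Suc c)" unfolding kap_def by auto
      have "i' = i" by (rule key[OF refl i' that refl])
      then show ?thesis using i' by simp
    qed
    ultimately show ?case by metis
  qed
  show ?thesis
  proof (rule skyeq2)
    show "length F = length G"
    proof -
      have sk: "skyline_ok F" "skyline_ok G" using assf_sky[OF F] assf_sky[OF G] by auto
      have "slen F i = slen G i" for i
      proof (rule ccontr)
        assume ne: "slen F i \<noteq> slen G i"
        show False
        proof (cases "slen F i < slen G i")
          case True
          then have "incell G i (slen G i)" "\<not> incell F i (slen G i)" unfolding incell_def by auto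
          moreover have "1 \<le> slen G i" using True by simp
          ultimately show False using ag[of "slen G i"] by blast
        next
          case False
          then have "slen G i < slen F i" using ne by simp
          then have "incell F i (slen F i)" "\<not> incell G i (slen F i)" unfolding incell_def by auto
          moreover have "1 \<le> slen F i" using \<open>slen G i < slen F i\<close> by simp
          ultimately show False using ag[of "slen F i"] by blast
        qed
      qed
      then show ?thesis using skyeq_len sk by blast
    qed
    show "incell F i c \<longleftrightarrow> incell G i c" for i c
      using ag[of c] by (cases "1 \<le> c") (auto simp: incell_def)
    show "incell F i c \<Longrightarrow> ent F i c = ent G i c" for i c
      using ag[of c] by (auto simp: incell_def)
  qed
qed


definition qk :: "nat list list \<Rightarrow> bool" where
  "qk F \<longleftrightarrow> (\<forall>i c. incell F i c \<longrightarrow> 0 < ent F i c \<and> ent F i c \<le> i) \<and>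
     (\<forall>i c. 1 \<le> c \<and> incell F i (c + 1) \<longrightarrow> ent F i (c + 1) \<le> ent F i c) \<and>
     (\<forall>i i' c. incell F i c \<and> incell F i' c \<and> i \<noteq> i' \<longrightarrow> ent F i c \<noteq> ent F i' c) \<and>
     (\<forall>r s c. r < s \<and> incell F r c \<and> incell F s c \<and> ent F s c < ent F r c \<longrightarrow>
        incell F r (c + 1) \<and> ent F s c < ent F r (c + 1)) \<and>
     (\<forall>r s c. r < s \<and> slen F r < slen F s \<and> incell F r c \<and> incell F s (c + 1) \<longrightarrow>
        ent F r c < ent F s (c + 1)) \<and>
     (\<forall>i. incell F i 1 \<longrightarrow> ent F i 1 = i)"

lemma qkt_qk: "F \<in> qKT1 \<Longrightarrow> qk F"
  unfolding qKT1_def qk_def mem_Collect_eq by (elim conjE) (intro conjI; assumption)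

lemma qkt_sky: "F \<in> qKT1 \<Longrightarrow> skyline_ok F"
  unfolding qKT1_def mem_Collect_eq by (elim conjE)

lemma qk_pos: "qk F \<Longrightarrow> incell F i c \<Longrightarrow> 0 < ent F i c \<and> ent F i c \<le> i"
  unfolding qk_def by (elim conjE) blast
lemma qk_dec: "qk F \<Longrightarrow> 1 \<le> c \<Longrightarrow> incell F i (c + 1) \<Longrightarrow> ent F i (c + 1) \<le> ent F i c"
  unfolding qk_def by (elim conjE) blast
lemma qk_dis: "qk F \<Longrightarrow> incell F i c \<Longrightarrow> incell F i' c \<Longrightarrow> i \<noteq> i' \<Longrightarrow> ent F i c \<noteq> ent F i' c"
  unfolding qk_def by (elim conjE) blast
lemma qk_3: "qk F \<Longrightarrow> r < s \<Longrightarrow> incell F r c \<Longrightarrow> incell F s c \<Longrightarrow> ent F s c < ent F r c \<Longrightarrow>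
        incell F r (c + 1) \<and> ent F s c < ent F r (c + 1)"
  unfolding qk_def by (elim conjE) blast
lemma qk_4: "qk F \<Longrightarrow> r < s \<Longrightarrow> slen F r < slen F s \<Longrightarrow> incell F r c \<Longrightarrow> incell F s (c + 1) \<Longrightarrow>
        ent F r c < ent F s (c + 1)"
  unfolding qk_def by (elim conjE) blast
lemma qk_fc: "qk F \<Longrightarrow> \<forall>i. incell F i 1 \<longrightarrow> ent F i 1 = i"
  unfolding qk_def by (elim conjE)

lemma qk_basic: "qk F \<Longrightarrow> basic F"
  unfolding basic_def using qk_pos qk_dec qk_dis by blast

lemma qk_intro:
  assumes "\<And>i c. incell F i c \<Longrightarrow> 0 < ent F i c \<and> ent F i c \<le> i"
    "\<And>i c. 1 \<le> c \<Longrightarrow> incell F i (c + 1) \<Longrightarrow> ent F i (c + 1) \<le> ent F i c"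
    "\<And>i i' c. incell F i c \<Longrightarrow> incell F i' c \<Longrightarrow> i \<noteq> i' \<Longrightarrow> ent F i c \<noteq> ent F i' c"
    "\<And>r s c. r < s \<Longrightarrow> incell F r c \<Longrightarrow> incell F s c \<Longrightarrow> ent F s c < ent F r c \<Longrightarrow>
        incell F r (c + 1) \<and> ent F s c < ent F r (c + 1)"
    "\<And>r s c. r < s \<Longrightarrow> slen F r < slen F s \<Longrightarrow> incell F r c \<Longrightarrow> incell F s (c + 1) \<Longrightarrow>
        ent F r c < ent F s (c + 1)"
    "\<And>i. incell F i 1 \<Longrightarrow> ent F i 1 = i"
  shows "qk F"
  unfolding qk_def using assms by blast

lemma rm_incell: "1 \<le> s \<Longrightarrow> incell (F[s - 1 := []]) i c \<longleftrightarrow> incell F i c \<and> i \<noteq> s"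
  by (cases "i = s") (auto simp: incell_iff nth_list_update)

lemma rm_ent: "1 \<le> s \<Longrightarrow> 1 \<le> i \<Longrightarrow> i \<noteq> s \<Longrightarrow> ent (F[s - 1 := []]) i c = ent F i c"
  by (simp add: ent_def)

lemma rm_slen: "1 \<le> s \<Longrightarrow> slen (F[s - 1 := []]) i = (if i = s then 0 else slen F i)"
  by (cases "1 \<le> i") (auto simp: slen_def nth_list_update)

lemma qk_rm:
  assumes q: "qk F" and s: "1 \<le> s"
  shows "qk (F[s - 1 := []])"
proof (rule qk_intro)
  note I = rm_incell[OF s] and E = rm_ent[OF s] and L = rm_slen[OF s]
  have e: "incell (F[s - 1 := []]) i c \<Longrightarrow> ent (F[s - 1 := []]) i c = ent F i c" for i c
    using I E incell_bounds by metis
  show "0 < ent (F[s - 1 := []]) i c \<and> ent (F[s - 1 := []]) i c \<le> i" if "incell (F[s - 1 := []]) i c" for i c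
    using that e I qk_pos[OF q] by metis
  show "ent (F[s - 1 := []]) i (c + 1) \<le> ent (F[s - 1 := []]) i c"
    if "1 \<le> c" "incell (F[s - 1 := []]) i (c + 1)" for i c
  proof -
    have "incell (F[s - 1 := []]) i c" using that incell_left[of _ i "c + 1" c] by simp
    then show ?thesis using that e I qk_dec[OF q] by metis
  qed
  show "ent (F[s - 1 := []]) i c \<noteq> ent (F[s - 1 := []]) i' c"
    if "incell (F[s - 1 := []]) i c" "incell (F[s - 1 := []]) i' c" "i \<noteq> i'" for i i' c
    using that e I qk_dis[OF q] by metis
  show "incell (F[s - 1 := []]) r (c + 1) \<and> ent (F[s - 1 := []]) s' c < ent (F[s - 1 := []]) r (c + 1)"
    if "r < s'" "incell (F[s - 1 := []]) r c" "incell (F[s - 1 := []]) s' c"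
      "ent (F[s - 1 := []]) s' c < ent (F[s - 1 := []]) r c" for r s' c
  proof -
    have a: "incell F r c" "incell F s' c" "r \<noteq> s" "s' \<noteq> s" using that I by auto
    have "ent F s' c < ent F r c" using that e by metis
    then have b: "incell F r (c + 1) \<and> ent F s' c < ent F r (c + 1)" using qk_3[OF q that(1) a(1,2)] by blast
    then have "incell (F[s - 1 := []]) r (c + 1)" using I a by blast
    then show ?thesis using b e that by metis
  qed
  show "ent (F[s - 1 := []]) r c < ent (F[s - 1 := []]) s' (c + 1)"
    if "r < s'" "slen (F[s - 1 := []]) r < slen (F[s - 1 := []]) s'" "incell (F[s - 1 := []]) r c"
      "incell (F[s - 1 := []]) s' (c + 1)" for r s' c
  proof -
    have a: "incell F r c" "incell F s' (c + 1)" "r \<noteq> s" "s' \<noteq> s" using that I by auto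
    have "slen F r < slen F s'" using that(2) L a by simp
    then have "ent F r c < ent F s' (c + 1)" using qk_4[OF q that(1)] a by blast
    then show ?thesis using e that by metis
  qed
  show "ent (F[s - 1 := []]) i 1 = i" if "incell (F[s - 1 := []]) i 1" for i
    using that e I qk_fc[OF q] by metis
qed

lemma qk_Q1:
  assumes q: "qk F" and rs: "r < s" and sl: "slen F r \<le> slen F s" and c: "1 \<le> c" "c \<le> slen F r"
  shows "ent F r c < ent F s c"
proof -
  have "\<forall>c. slen F r - c = d \<longrightarrow> 1 \<le> c \<longrightarrow> c \<le> slen F r \<longrightarrow> ent F r c < ent F s c" for d
  proof (induction d)
    case 0
    show ?case
    proof (intro allI impI)
      fix c assume a: "slen F r - c = 0" "1 \<le> c" "c \<le> slen F r"
      have ir: "incell F r c" "incell F s c" using a sl unfolding incell_def by auto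
      show "ent F r c < ent F s c"
      proof (rule ccontr)
        assume "\<not> ent F r c < ent F s c"
        then have "ent F s c < ent F r c" using qk_dis[OF q ir(1,2)] rs by (simp add: nat_neq_iff)
        then have "incell F r (c + 1)" using qk_3[OF q rs ir] by blast
        then show False using a unfolding incell_def by simp
      qed
    qed
  next
    case (Suc d)
    show ?case
    proof (intro allI impI)
      fix c assume a: "slen F r - c = Suc d" "1 \<le> c" "c \<le> slen F r"
      have ir: "incell F r c" "incell F s c" using a sl unfolding incell_def by auto
      show "ent F r c < ent F s c"
      proof (rule ccontr)
        assume "\<not> ent F r c < ent F s c"
        then have lt: "ent F s c < ent F r c" using qk_dis[OF q ir(1,2)] rs by (simp add: nat_neq_iff)
        then have b: "ent F s c < ent F r (c + 1)" using qk_3[OF q rs ir] by blast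
        have ih: "ent F r (c + 1) < ent F s (c + 1)" using Suc.IH a by simp
        have "incell F s (c + 1)" using a sl unfolding incell_def by simp
        then have "ent F s (c + 1) \<le> ent F s c" using qk_dec[OF q a(2)] by blast
        then show False using b ih by simp
      qed
    qed
  qed
  then show ?thesis using c by blast
qed

lemma qk_minrow:
  assumes q: "qk F" and k: "1 \<le> k" and top: "\<forall>c. k < c \<longrightarrow> kap F c = {}"
    and ins: "incell F s k" and m: "ent F s k = Min (kap F k)"
  shows "slen F s = k" and "\<And>c. 1 \<le> c \<Longrightarrow> c < k \<Longrightarrow> ent F s c = Min {x \<in> kap F c. ent F s (Suc c) \<le> x}"
proof -
  have slk: "slen F i \<le> k" for i
  proof (rule ccontr)
    assume "\<not> slen F i \<le> k"
    then have "incell F i (slen F i)" "k < slen F i" unfolding incell_def using k by auto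
    then have "ent F i (slen F i) \<in> kap F (slen F i)" "kap F (slen F i) = {}"
      using top unfolding kap_def by blast+
    then show False by simp
  qed
  show sls: "slen F s = k" using slk[of s] ins unfolding incell_def by simp
  fix c assume c: "1 \<le> c" "c < k"
  let ?a = "ent F s (Suc c)"
  have isc: "incell F s c" "incell F s (Suc c)" using ins c unfolding incell_def by auto
  show "ent F s c = Min {x \<in> kap F c. ?a \<le> x}"
  proof (rule Min_eqI[symmetric])
    show "finite {x \<in> kap F c. ?a \<le> x}" using kap_finite by simp
    show "ent F s c \<in> {x \<in> kap F c. ?a \<le> x}"
      using isc qk_dec[OF q c(1), of s] unfolding kap_def by auto
    fix y assume "y \<in> {x \<in> kap F c. ?a \<le> x}"
    then obtain r where r: "incell F r c" "y = ent F r c" "?a \<le> y" unfolding kap_def by auto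
    show "ent F s c \<le> y"
    proof (rule ccontr)
      assume "\<not> ent F s c \<le> y"
      then have lt: "ent F r c < ent F s c" using r by simp
      then have rs: "r \<noteq> s" by auto
      show False
      proof (cases "r < s")
        case True
        show False
        proof (cases "slen F r < slen F s")
          case True
          then have "ent F r c < ?a" using qk_4[OF q \<open>r < s\<close> True r(1)] isc by simp
          then show False using r by simp
        next
          case False
          then have "slen F r = k" using slk[of r] sls by simp
          then have "ent F r k < ent F s k" using qk_Q1[OF q \<open>r < s\<close>] sls k by simp
          moreover have "ent F r k \<in> kap F k" using \<open>slen F r = k\<close> k unfolding kap_def incell_def by auto
          then have "Min (kap F k) \<le> ent F r k" using kap_finite by simp
          ultimately show False using m by simp
        qed
      next
        case False
        then have "s < r" using rs by simp
        then have "ent F r c < ent F s (c + 1)" using qk_3[OF q _ isc(1) r(1) lt] by blast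
        then show False using r by simp
      qed
    qed
  qed
qed


lemma kap1_empty: "kap F 1 = {} \<longleftrightarrow> (\<forall>i<length F. F ! i = [])"
proof
  assume a: "kap F 1 = {}"
  show "\<forall>i<length F. F ! i = []"
  proof (intro allI impI)
    fix i assume i: "i < length F"
    show "F ! i = []"
    proof (rule ccontr)
      assume "F ! i \<noteq> []"
      then have "incell F (Suc i) 1" using i by (simp add: incell_iff Suc_le_eq)
      then have "ent F (Suc i) 1 \<in> kap F 1" unfolding kap_def by blast
      then show False using a by simp
    qed
  qed
next
  assume a: "\<forall>i<length F. F ! i = []"
  have "\<not> incell F i 1" for i using a by (auto simp: incell_iff)
  then show "kap F 1 = {}" unfolding kap_def by auto
qed

lemma kap_rm_sub:
  assumes qF: "qk F" and K: "\<And>c. 1 \<le> c \<Longrightarrow> kap F c = kap G c"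
    and si: "\<And>c. incell F s c \<longleftrightarrow> incell G s c" and se: "\<And>c. incell F s c \<Longrightarrow> ent F s c = ent G s c"
    and s: "1 \<le> s" and c: "1 \<le> c"
  shows "kap (F[s - 1 := []]) c \<subseteq> kap (G[s - 1 := []]) c"
proof
  fix x assume "x \<in> kap (F[s - 1 := []]) c"
  then obtain i where i: "incell (F[s - 1 := []]) i c" "x = ent (F[s - 1 := []]) i c" unfolding kap_def by auto
  then have i2: "incell F i c" "i \<noteq> s" "x = ent F i c" using rm_incell[OF s] rm_ent[OF s] incell_bounds by metis+
  then have "x \<in> kap G c" using K[OF c] unfolding kap_def by blast
  then obtain i' where i': "incell G i' c" "x = ent G i' c" unfolding kap_def by auto
  have "i' \<noteq> s"
  proof
    assume "i' = s"
    then have "incell F s c" "ent F s c = x" using i' si se by auto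
    then show False using qk_dis[OF qF i2(1) _ i2(2)] i2(3) by simp
  qed
  then have "incell (G[s - 1 := []]) i' c" "x = ent (G[s - 1 := []]) i' c"
    using i' rm_incell[OF s] rm_ent[OF s] incell_bounds by metis+
  then show "x \<in> kap (G[s - 1 := []]) c" unfolding kap_def by blast
qed

lemma qk_unique:
  "qk F \<Longrightarrow> qk G \<Longrightarrow> length F = length G \<Longrightarrow> (\<And>c. 1 \<le> c \<Longrightarrow> kap F c = kap G c) \<Longrightarrow> F = G"
proof (induction "card {i. i < length F \<and> F ! i \<noteq> []}" arbitrary: F G rule: less_induct)
  case less
  note qF = less.prems(1) and qG = less.prems(2) and len = less.prems(3) and K = less.prems(4)
  show ?case
  proof (cases "kap F 1 = {}")
    case True
    then have "kap G 1 = {}" using K[of 1] by simp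
    then show ?thesis using True kap1_empty[of F] kap1_empty[of G] len by (simp add: nth_equalityI)
  next
    case False
    define Cs where "Cs = {c. 1 \<le> c \<and> kap F c \<noteq> {}}"
    have finC: "finite Cs"
    proof (rule finite_subset[of _ "{1..sum_list (map length F)}"])
      show "Cs \<subseteq> {1..sum_list (map length F)}"
      proof
        fix c assume "c \<in> Cs"
        then obtain i where "incell F i c" "1 \<le> c" unfolding Cs_def kap_def by auto
        then have "c \<le> length (F ! (i - 1))" "F ! (i - 1) \<in> set F" by (auto simp: incell_iff)
        moreover have "length (F ! (i - 1)) \<le> sum_list (map length F)"
          using calculation(2) by (simp add: member_le_sum_list)
        ultimately show "c \<in> {1..sum_list (map length F)}" using \<open>1 \<le> c\<close> by simp
      qed
    qed simp
    have oneC: "1 \<in> Cs" using False unfolding Cs_def by simp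
    define k where "k = Max Cs"
    have kC: "k \<in> Cs" unfolding k_def using finC oneC Max_in by blast
    have k1: "1 \<le> k" using kC unfolding Cs_def by simp
    have topF: "\<forall>c. k < c \<longrightarrow> kap F c = {}"
    proof (intro allI impI, rule ccontr)
      fix c assume that: "k < c"
      assume "kap F c \<noteq> {}"
      then have "c \<in> Cs" using that k1 unfolding Cs_def by simp
      then have "c \<le> k" unfolding k_def using finC by simp
      then show False using that by simp
    qed
    have topG: "\<forall>c. k < c \<longrightarrow> kap G c = {}" using topF K k1 by simp
    have kne: "kap F k \<noteq> {}" using kC unfolding Cs_def by simp
    have minin: "Min (kap F k) \<in> kap F k" using kne kap_finite by simp
    then obtain s where s: "incell F s k" "ent F s k = Min (kap F k)" unfolding kap_def by auto
    have "Min (kap G k) \<in> kap G k" using minin K[OF k1] by simp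
    then obtain t where t: "incell G t k" "ent G t k = Min (kap G k)" unfolding kap_def by auto
    note mF = qk_minrow[OF qF k1 topF s] and mG = qk_minrow[OF qG k1 topG t]
    have eq: "\<forall>c. k - c = d \<longrightarrow> 1 \<le> c \<longrightarrow> c \<le> k \<longrightarrow> ent F s c = ent G t c" for d
    proof (induction d)
      case 0
      then show ?case using s t K[OF k1] by auto
    next
      case (Suc d)
      show ?case
      proof (intro allI impI)
        fix c assume a: "k - c = Suc d" "1 \<le> c" "c \<le> k"
        then have ck: "c < k" by simp
        have "ent F s (Suc c) = ent G t (Suc c)" using Suc.IH a by simp
        then show "ent F s c = ent G t c" using mF(2)[OF a(2) ck] mG(2)[OF a(2) ck] K[OF a(2)] by simp
      qed
    qed
    have eqc: "ent F s c = ent G t c" if "1 \<le> c" "c \<le> k" for c using eq that by blast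
    have s1: "incell F s 1" "incell G t 1" using s t k1 incell_left by blast+
    have st: "s = t" using eqc[of 1] k1 qk_fc[OF qF] qk_fc[OF qG] s1 by simp
    have sb: "1 \<le> s" "s \<le> length F" using s incell_bounds by blast+
    have si: "incell F s c \<longleftrightarrow> incell G s c" for c
      using mF(1) mG(1) st unfolding incell_def by simp
    have se: "incell F s c \<Longrightarrow> ent F s c = ent G s c" for c
      using eqc[of c] mF(1) st unfolding incell_def by simp
    have row: "F ! (s - 1) = G ! (s - 1)"
    proof (rule nth_equalityI)
      show "length (F ! (s - 1)) = length (G ! (s - 1))"
        using mF(1) mG(1) st sb len by (simp add: slen_def)
      fix j assume j: "j < length (F ! (s - 1))"
      then have "incell F s (Suc j)" using sb by (simp add: incell_iff)
      then show "F ! (s - 1) ! j = G ! (s - 1) ! j" using se[of "Suc j"] by (simp add: ent_def)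
    qed
    let ?F = "F[s - 1 := []]" and ?G = "G[s - 1 := []]"
    have sse: "\<And>c. incell G s c \<Longrightarrow> ent G s c = ent F s c" using se si by metis
    have Kr: "kap ?F c = kap ?G c" if "1 \<le> c" for c
      using kap_rm_sub[OF qF K si se sb(1) that] kap_rm_sub[OF qG _ si[symmetric] sse sb(1) that] K
      by (metis subset_antisym)
    have fin: "finite {i. i < length F \<and> F ! i \<noteq> []}" by simp
    have inS: "s - 1 \<in> {i. i < length F \<and> F ! i \<noteq> []}"
      using s(1) sb by (auto simp: incell_iff)
    have "{i. i < length ?F \<and> ?F ! i \<noteq> []} = {i. i < length F \<and> F ! i \<noteq> []} - {s - 1}"
    proof (rule set_eqI)
      fix x
      show "x \<in> {i. i < length ?F \<and> ?F ! i \<noteq> []} \<longleftrightarrow> x \<in> {i. i < length F \<and> F ! i \<noteq> []} - {s - 1}"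
        by (cases "x = s - 1") auto
    qed
    then have lt: "card {i. i < length ?F \<and> ?F ! i \<noteq> []} < card {i. i < length F \<and> F ! i \<noteq> []}"
      using card_Diff1_less[OF fin inS] by simp
    have "?F = ?G" using less.hyps[OF lt qk_rm[OF qF sb(1)] qk_rm[OF qG sb(1)]] len Kr by simp
    then have "?F[s - 1 := F ! (s - 1)] = ?G[s - 1 := G ! (s - 1)]" using row by simp
    then show ?thesis by simp
  qed
qed

lemma qk_len:
  assumes "qk F" "skyline_ok F"
  shows "length F = Max (insert 0 (kap F 1))"
proof (cases "F = []")
  case True
  then have "kap F 1 = {}" using kap1_empty by simp
  then show ?thesis using True by simp
next
  case False
  then have "last F \<noteq> []" using assms(2) unfolding skyline_ok_def by simp
  then have "F ! (length F - 1) \<noteq> []" using False by (simp add: last_conv_nth)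
  then have inc: "incell F (length F) 1" using False by (simp add: incell_iff Suc_le_eq)
  then have "length F \<in> kap F 1" using qk_fc[OF assms(1)] unfolding kap_def by force
  moreover have "x \<le> length F" if "x \<in> kap F 1" for x
    using that qk_fc[OF assms(1)] incell_bounds unfolding kap_def by force
  ultimately show ?thesis using kap_finite[of F 1]
    by (intro Max_eqI[symmetric]) auto
qed

lemma qkt_unique:
  assumes "F \<in> qKT1" "G \<in> qKT1" "\<And>c. 1 \<le> c \<Longrightarrow> kap F c = kap G c"
  shows "F = G"
proof (rule qk_unique)
  show "qk F" "qk G" using assms qkt_qk by auto
  show "length F = length G"
    using qk_len[OF qkt_qk[OF assms(1)] qkt_sky[OF assms(1)]] qk_len[OF qkt_qk[OF assms(2)] qkt_sky[OF assms(2)]]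
      assms(3)[of 1] by simp
qed (rule assms(3))


definition II :: "(nat \<Rightarrow> nat set) \<Rightarrow> nat \<Rightarrow> nat set \<Rightarrow> (nat \<Rightarrow> nat list) \<Rightarrow> bool" where
  "II K c X g \<longleftrightarrow>
     (\<forall>r. g r \<noteq> [] \<longleftrightarrow> r \<in> K 1) \<and>
     (\<forall>r. g r \<noteq> [] \<longrightarrow> g r ! 0 = r) \<and>
     (\<forall>r. sorted_wrt (\<lambda>a b. b \<le> a) (g r)) \<and>
     (\<forall>r. length (g r) \<le> Suc c) \<and>
     (\<forall>c'. 1 \<le> c' \<and> c' \<le> c \<longrightarrow> {g r ! (c' - 1) | r. c' \<le> length (g r)} = K c') \<and>
     {g r ! c | r. Suc c \<le> length (g r)} = X \<and>
     (\<forall>c' r r'. 1 \<le> c' \<and> r \<noteq> r' \<and> c' \<le> length (g r) \<and> c' \<le> length (g r') \<longrightarrow> g r ! (c' - 1) \<noteq> g r' ! (c' - 1)) \<and>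
     (\<forall>j s r. r < s \<and> Suc j < length (g s) \<and> j < length (g r) \<and> g s ! Suc j \<le> g r ! j \<longrightarrow>
        Suc j < length (g r) \<and> g s ! Suc j < g r ! Suc j)"

lemma II_intro:
  assumes "\<And>r. g r \<noteq> [] \<longleftrightarrow> r \<in> K 1"
    "\<And>r. g r \<noteq> [] \<Longrightarrow> g r ! 0 = r"
    "\<And>r. sorted_wrt (\<lambda>a b. b \<le> a) (g r)"
    "\<And>r. length (g r) \<le> Suc c"
    "\<And>c'. 1 \<le> c' \<Longrightarrow> c' \<le> c \<Longrightarrow> {g r ! (c' - 1) | r. c' \<le> length (g r)} = K c'"
    "{g r ! c | r. Suc c \<le> length (g r)} = X"
    "\<And>c' r r'. 1 \<le> c' \<Longrightarrow> r \<noteq> r' \<Longrightarrow> c' \<le> length (g r) \<Longrightarrow> c' \<le> length (g r') \<Longrightarrow> g r ! (c' - 1) \<noteq> g r' ! (c' - 1)"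
    "\<And>j s r. r < s \<Longrightarrow> Suc j < length (g s) \<Longrightarrow> j < length (g r) \<Longrightarrow> g s ! Suc j \<le> g r ! j \<Longrightarrow>
        Suc j < length (g r) \<and> g s ! Suc j < g r ! Suc j"
  shows "II K c X g"
  unfolding II_def
  apply (intro conjI)
  subgoal using assms(1) by blast
  subgoal using assms(2) by blast
  subgoal using assms(3) by blast
  subgoal using assms(4) by blast
  subgoal using assms(5) by blast
  subgoal using assms(6) by blast
  subgoal using assms(7) by blast
  subgoal using assms(8) by blast
  done

lemma II_ne0: "II K c X g \<Longrightarrow> (\<forall>r. g r \<noteq> [] \<longleftrightarrow> r \<in> K 1)"
  unfolding II_def by (elim conjE) assumption

lemmas II_ne = II_ne0[rule_format, unfolded conj_imp_eq_imp_imp]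

lemma II_hd0: "II K c X g \<Longrightarrow> (\<forall>r. g r \<noteq> [] \<longrightarrow> g r ! 0 = r)"
  unfolding II_def by (elim conjE) assumption

lemmas II_hd = II_hd0[rule_format, unfolded conj_imp_eq_imp_imp]

lemma II_sorted0: "II K c X g \<Longrightarrow> (\<forall>r. sorted_wrt (\<lambda>a b. b \<le> a) (g r))"
  unfolding II_def by (elim conjE) assumption

lemmas II_sorted = II_sorted0[rule_format, unfolded conj_imp_eq_imp_imp]

lemma II_len0: "II K c X g \<Longrightarrow> (\<forall>r. length (g r) \<le> Suc c)"
  unfolding II_def by (elim conjE) assumption

lemmas II_len = II_len0[rule_format, unfolded conj_imp_eq_imp_imp]

lemma II_col0: "II K c X g \<Longrightarrow> (\<forall>c'. 1 \<le> c' \<and> c' \<le> c \<longrightarrow> {g r ! (c' - 1) | r. c' \<le> length (g r)} = K c')"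
  unfolding II_def by (elim conjE) assumption

lemmas II_col = II_col0[rule_format, unfolded conj_imp_eq_imp_imp]

lemma II_X0: "II K c X g \<Longrightarrow> {g r ! c | r. Suc c \<le> length (g r)} = X"
  unfolding II_def by (elim conjE) assumption

lemmas II_X = II_X0[rule_format, unfolded conj_imp_eq_imp_imp]

lemma II_dis0: "II K c X g \<Longrightarrow> (\<forall>c' r r'. 1 \<le> c' \<and> r \<noteq> r' \<and> c' \<le> length (g r) \<and> c' \<le> length (g r') \<longrightarrow> g r ! (c' - 1) \<noteq> g r' ! (c' - 1))"
  unfolding II_def by (elim conjE) assumption

lemmas II_dis = II_dis0[rule_format, unfolded conj_imp_eq_imp_imp]

lemma II_P0: "II K c X g \<Longrightarrow> (\<forall>j s r. r < s \<and> Suc j < length (g s) \<and> j < length (g r) \<and> g s ! Suc j \<le> g r ! j \<longrightarrow>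
        Suc j < length (g r) \<and> g s ! Suc j < g r ! Suc j)"
  unfolding II_def by (elim conjE) assumption

lemmas II_P = II_P0[rule_format, unfolded conj_imp_eq_imp_imp]

lemma sorted_last_le:
  fixes xs :: "nat list"
  assumes "sorted_wrt (\<lambda>a b. b \<le> a) xs" "xs \<noteq> []" "a \<in> set xs"
  shows "last xs \<le> a"
proof -
  obtain i where i: "i < length xs" "a = xs ! i" using assms(3) by (auto simp: in_set_conv_nth)
  have "last xs = xs ! (length xs - 1)" using assms(2) by (simp add: last_conv_nth)
  moreover have "xs ! (length xs - 1) \<le> xs ! i"
    using assms(1) i by (cases "i = length xs - 1") (auto simp: sorted_wrt_iff_nth_less)
  ultimately show ?thesis using i by simp
qed

lemma card_rows:
  assumes fin: "finite R" and inj: "inj_on f R"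
  shows "card (f ` R) = card R"
  using card_image[OF inj] .

lemma II_step:
  assumes inv: "II K c X g" and c: "1 \<le> c" and finK1: "finite (K 1)"
    and dm: "domin (K c) (K (Suc c))" and finK: "finite (K (Suc c))"
    and xK: "x \<in> K (Suc c)" and XK: "X \<subseteq> K (Suc c)" and xX: "\<forall>y\<in>X. x < y"
  shows "II K c (insert x X) (gplace c g x)"
proof -
  define Pr where "Pr r \<longleftrightarrow> length (g r) = c \<and> x \<le> last (g r)" for r
  define s0 where "s0 = (LEAST r. Pr r)"
  have gp: "gplace c g x = g(s0 := g s0 @ [x])" unfolding gplace_def s0_def Pr_def by (simp add: Let_def)
  have finR: "finite {r. P r \<and> g r \<noteq> []}" for P
  proof (rule finite_subset[OF _ finK1])
    show "{r. P r \<and> g r \<noteq> []} \<subseteq> K 1" using II_ne[OF inv] by blast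
  qed
  have ex: "\<exists>r. Pr r"
  proof -
    define A where "A = {r. c \<le> length (g r) \<and> x \<le> g r ! (c - 1)}"
    define B where "B = {r. Suc c \<le> length (g r)}"
    have A_ne: "A = {r. (c \<le> length (g r) \<and> x \<le> g r ! (c - 1)) \<and> g r \<noteq> []}"
      unfolding A_def using c by auto
    have B_ne: "B = {r. Suc c \<le> length (g r) \<and> g r \<noteq> []}" unfolding B_def by auto
    have finA: "finite A" using finR A_ne by simp
    have finB: "finite B" using finR B_ne by simp
    have colc: "{g r ! (c - 1) | r. c \<le> length (g r)} = K c" using II_col[OF inv c order_refl] .
    have imA: "(\<lambda>r. g r ! (c - 1)) ` A = {y \<in> K c. x \<le> y}"
    proof (rule set_eqI)
      fix y
      show "y \<in> (\<lambda>r. g r ! (c - 1)) ` A \<longleftrightarrow> y \<in> {y \<in> K c. x \<le> y}"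
      proof
        assume "y \<in> (\<lambda>r. g r ! (c - 1)) ` A"
        then obtain r where "r \<in> A" "y = g r ! (c - 1)" by blast
        then have y1: "y \<in> {g r ! (c - 1) | r. c \<le> length (g r)}" and "x \<le> y" unfolding A_def by auto
        have "y \<in> K c" using y1 unfolding colc .
        then show "y \<in> {y \<in> K c. x \<le> y}" using \<open>x \<le> y\<close> by simp
      next
        assume "y \<in> {y \<in> K c. x \<le> y}"
        then have "y \<in> K c" "x \<le> y" by auto
        then have "y \<in> {g r ! (c - 1) | r. c \<le> length (g r)}" "x \<le> y" unfolding colc by auto
        then obtain r where "c \<le> length (g r)" "y = g r ! (c - 1)" "x \<le> y" by blast
        then show "y \<in> (\<lambda>r. g r ! (c - 1)) ` A" unfolding A_def by blast
      qed
    qed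
    have injA: "inj_on (\<lambda>r. g r ! (c - 1)) A"
    proof (rule inj_onI)
      fix a b assume ab: "a \<in> A" "b \<in> A" "g a ! (c - 1) = g b ! (c - 1)"
      show "a = b"
      proof (rule ccontr)
        assume "a \<noteq> b"
        then have "g a ! (c - 1) \<noteq> g b ! (c - 1)"
          using II_dis[OF inv c, of a b] ab unfolding A_def by simp
        then show False using ab by simp
      qed
    qed
    have imB: "(\<lambda>r. g r ! c) ` B = X"
    proof -
      have "(\<lambda>r. g r ! c) ` B = {g r ! c | r. Suc c \<le> length (g r)}" unfolding B_def by blast
      then show ?thesis using II_X[OF inv] by simp
    qed
    have injB: "inj_on (\<lambda>r. g r ! c) B"
    proof (rule inj_onI)
      fix a b assume ab: "a \<in> B" "b \<in> B" "g a ! c = g b ! c"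
      show "a = b"
      proof (rule ccontr)
        assume "a \<noteq> b"
        then have "g a ! (Suc c - 1) \<noteq> g b ! (Suc c - 1)"
          using II_dis[OF inv, of "Suc c" a b] ab unfolding B_def by simp
        then show False using ab by simp
      qed
    qed
    have cB: "card B = card X" using card_image[OF injB] imB by simp
    have c2: "card X \<le> card {y \<in> K (Suc c). x < y}"
    proof (rule card_mono)
      show "finite {y \<in> K (Suc c). x < y}" using finK by simp
      show "X \<subseteq> {y \<in> K (Suc c). x < y}" using XK xX by blast
    qed
    have c3: "card {y \<in> K (Suc c). x < y} < card {y \<in> K (Suc c). x \<le> y}"
    proof (rule psubset_card_mono)
      show "finite {y \<in> K (Suc c). x \<le> y}" using finK by simp
      show "{y \<in> K (Suc c). x < y} \<subset> {y \<in> K (Suc c). x \<le> y}" using xK by auto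
    qed
    have c4: "card {y \<in> K (Suc c). x \<le> y} \<le> card {y \<in> K c. x \<le> y}" using dm unfolding domin_def by blast
    have c5: "card {y \<in> K c. x \<le> y} = card A" using card_image[OF injA] imA by simp
    have "card B < card A" using cB c2 c3 c4 c5 by linarith
    then have "\<not> A \<subseteq> B" using card_mono[OF finB, of A] by linarith
    then obtain r where r: "r \<in> A" "r \<notin> B" by blast
    then have lr: "length (g r) = c" and xr: "x \<le> g r ! (c - 1)" unfolding A_def B_def by auto
    have "g r \<noteq> []" using lr c by auto
    then have "last (g r) = g r ! (c - 1)" using lr by (simp add: last_conv_nth)
    then show ?thesis unfolding Pr_def using lr xr by auto
  qed
  have Ps0: "Pr s0" unfolding s0_def using ex by (metis LeastI)
  have notPr: "\<not> Pr r" if "r < s0" for r using that unfolding s0_def by (rule not_less_Least)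
  have ls0: "length (g s0) = c" and xle: "x \<le> last (g s0)" using Ps0 unfolding Pr_def by auto
  have s0ne: "g s0 \<noteq> []" using ls0 c by auto
  define g' where "g' = g(s0 := g s0 @ [x])"
  have g's0: "g' s0 = g s0 @ [x]" unfolding g'_def by simp
  have g'o: "g' r = g r" if "r \<noteq> s0" for r unfolding g'_def using that by simp
  have lg's0: "length (g' s0) = Suc c" using ls0 g's0 by simp
  have g's0_lt: "g' s0 ! j = g s0 ! j" if "j < c" for j using g's0 ls0 that by (simp add: nth_append)
  have g's0_c: "g' s0 ! c = x" using g's0 ls0 by (simp add: nth_append)
  have xnotX: "x \<notin> X" using xX by auto
  have old_le: "c' \<le> length (g' r) \<longleftrightarrow> c' \<le> length (g r)" if "c' \<le> c" for c' r
    using that lg's0 ls0 g'o by (cases "r = s0") auto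
  have old_ent: "g' r ! (c' - 1) = g r ! (c' - 1)" if "1 \<le> c'" "c' \<le> c" for c' r
    using that g's0_lt g'o by (cases "r = s0") auto
  have "II K c (insert x X) g'"
  proof (rule II_intro)
    show "g' r \<noteq> [] \<longleftrightarrow> r \<in> K 1" for r
      using II_ne[OF inv, of r] g's0 g'o s0ne by (cases "r = s0") auto
    show "g' r ! 0 = r" if "g' r \<noteq> []" for r
    proof (cases "r = s0")
      case True
      then show ?thesis using II_hd[OF inv s0ne] g's0_lt[of 0] c by simp
    next
      case False
      then show ?thesis using II_hd[OF inv] that g'o by simp
    qed
    show "sorted_wrt (\<lambda>a b. b \<le> a) (g' r)" for r
    proof (cases "r = s0")
      case True
      have "\<forall>a\<in>set (g s0). x \<le> a" using sorted_last_le[OF II_sorted[OF inv] s0ne] xle by fastforce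
      then show ?thesis using True g's0 II_sorted[OF inv, of s0] by (simp add: sorted_wrt_append)
    next
      case False
      then show ?thesis using II_sorted[OF inv] g'o by simp
    qed
    show "length (g' r) \<le> Suc c" for r using II_len[OF inv] lg's0 g'o by (cases "r = s0") auto
    show "{g' r ! (c' - 1) | r. c' \<le> length (g' r)} = K c'" if "1 \<le> c'" "c' \<le> c" for c'
      using II_col[OF inv that] old_le[OF that(2)] old_ent[OF that] by simp
    show "{g' r ! c | r. Suc c \<le> length (g' r)} = insert x X"
    proof -
      have "{g' r ! c | r. Suc c \<le> length (g' r)} = insert x {g r ! c | r. Suc c \<le> length (g r)}"
      proof (rule set_eqI)
        fix y
        show "y \<in> {g' r ! c | r. Suc c \<le> length (g' r)} \<longleftrightarrow> y \<in> insert x {g r ! c | r. Suc c \<le> length (g r)}"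
        proof
          assume "y \<in> {g' r ! c | r. Suc c \<le> length (g' r)}"
          then obtain r where r: "y = g' r ! c" "Suc c \<le> length (g' r)" by blast
          show "y \<in> insert x {g r ! c | r. Suc c \<le> length (g r)}"
          proof (cases "r = s0")
            case True
            then show ?thesis using r g's0_c by simp
          next
            case False
            then have "y = g r ! c" "Suc c \<le> length (g r)" using r g'o by auto
            then show ?thesis by blast
          qed
        next
          assume "y \<in> insert x {g r ! c | r. Suc c \<le> length (g r)}"
          then consider (a) "y = x" | (b) r where "y = g r ! c" "Suc c \<le> length (g r)" by blast
          then show "y \<in> {g' r ! c | r. Suc c \<le> length (g' r)}"
          proof cases
            case a
            then have "y = g' s0 ! c" "Suc c \<le> length (g' s0)" using g's0_c lg's0 by auto
            then show ?thesis by blast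
          next
            case (b r)
            then have "r \<noteq> s0" using ls0 by auto
            then have "y = g' r ! c" "Suc c \<le> length (g' r)" using b g'o by auto
            then show ?thesis by blast
          qed
        qed
      qed
      then show ?thesis using II_X[OF inv] by simp
    qed
    show "g' r ! (c' - 1) \<noteq> g' r' ! (c' - 1)"
      if a: "1 \<le> c'" "r \<noteq> r'" "c' \<le> length (g' r)" "c' \<le> length (g' r')" for c' r r'
    proof (cases "c' \<le> c")
      case True
      have "c' \<le> length (g r)" "c' \<le> length (g r')" using a(3,4) old_le[OF True] by auto
      then have "g r ! (c' - 1) \<noteq> g r' ! (c' - 1)" using II_dis[OF inv a(1,2)] by simp
      then show ?thesis using old_ent[OF a(1) True] by simp
    next
      case False
      have "length (g' r) \<le> Suc c" by (cases "r = s0") (simp_all add: lg's0 g'o II_len[OF inv])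
      then have cc: "c' = Suc c" using a(3) False by simp
      have memX: "g r'' ! c \<in> X" if "Suc c \<le> length (g r'')" for r''
        using II_X[OF inv] that by blast
      show ?thesis
      proof (cases "r = s0")
        case True
        then have "r' \<noteq> s0" using a by simp
        then have "g' r' ! c \<in> X" using memX[of r'] a(4) cc g'o by simp
        then show ?thesis using True cc g's0_c xnotX by auto
      next
        case False
        note rn = False
        show ?thesis
        proof (cases "r' = s0")
          case True
          then have "g' r ! c \<in> X" using memX[of r] a(3) cc g'o rn by simp
          then show ?thesis using True cc g's0_c xnotX by auto
        next
          case False
          have "c' \<le> length (g r)" "c' \<le> length (g r')" using a(3,4) g'o rn False by auto
          then show ?thesis using rn False g'o II_dis[OF inv a(1,2)] by simp
        qed
      qed
    qed
    show "Suc j < length (g' r) \<and> g' s ! Suc j < g' r ! Suc j"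
      if a: "r < s" "Suc j < length (g' s)" "j < length (g' r)" "g' s ! Suc j \<le> g' r ! j" for j s r
    proof (cases "s = s0")
      case True
      then have rs0: "r \<noteq> s0" using a by simp
      have jc: "j < c" using a(2) True lg's0 by simp
      show ?thesis
      proof (cases "Suc j < c")
        case True
        have "Suc j < length (g s0)" "g s0 ! Suc j \<le> g r ! j"
          using True ls0 a(4) \<open>s = s0\<close> g's0_lt g'o[OF rs0] by auto
        then show ?thesis using II_P[OF inv, of r s0 j] a(1,3) \<open>s = s0\<close> g'o[OF rs0] g's0_lt True by simp
      next
        case False
        then have jc1: "Suc j = c" using jc by simp
        have lr: "c \<le> length (g r)" using a(3) g'o[OF rs0] jc1 by simp
        have jj: "j = c - 1" using jc1 by simp
        have xr: "x \<le> g r ! (c - 1)" using a(4) \<open>s = s0\<close> g's0_c g'o[OF rs0] jc1 jj by simp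
        have "length (g r) \<noteq> c"
        proof
          assume l: "length (g r) = c"
          then have "last (g r) = g r ! (c - 1)" using c
            by (metis last_conv_nth list.size(3) not_one_le_zero)
          then have "Pr r" unfolding Pr_def using l xr by simp
          then show False using notPr a(1) \<open>s = s0\<close> by simp
        qed
        then have lr1: "length (g r) = Suc c" using lr II_len[OF inv, of r] by simp
        then have "Suc c \<le> length (g r)" by simp
        then have "g r ! c \<in> X" using II_X[OF inv] by blast
        then have "x < g r ! c" using xX by simp
        then show ?thesis using lr1 g'o[OF rs0] \<open>s = s0\<close> g's0_c jc1 by simp
      qed
    next
      case False
      note ss0 = False
      show ?thesis
      proof (cases "r = s0")
        case False
        then show ?thesis using II_P[OF inv a(1)] a g'o ss0 by simp
      next
        case True
        have ls: "Suc j < length (g s)" using a(2) g'o[OF ss0] by simp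
        show ?thesis
        proof (cases "Suc j < c")
          case True
          have "j < length (g s0)" "g s ! Suc j \<le> g s0 ! j"
            using True ls0 a(4) \<open>r = s0\<close> g's0_lt g'o[OF ss0] by auto
          then have "Suc j < length (g s0) \<and> g s ! Suc j < g s0 ! Suc j"
            using II_P[OF inv, of s0 s j] a(1) \<open>r = s0\<close> ls by simp
          then show ?thesis using \<open>r = s0\<close> lg's0 g's0_lt True g'o[OF ss0] by simp
        next
          case False
          have "Suc j < Suc c" using ls II_len[OF inv, of s] by simp
          then have jc1: "Suc j = c" using False by simp
          show ?thesis
          proof (rule ccontr)
            assume "\<not> ?thesis"
            have "j < length (g s0)" using jc1 ls0 by simp
            moreover have "g s ! Suc j \<le> g s0 ! j"
              using a(4) \<open>r = s0\<close> g's0_lt[of j] jc1 g'o[OF ss0] by simp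
            ultimately have "Suc j < length (g s0)" using II_P[OF inv, of s0 s j] a(1) \<open>r = s0\<close> ls by simp
            then show False using jc1 ls0 by simp
          qed
        qed
      qed
    qed
  qed
  then show ?thesis using gp g'_def by simp
qed


lemma II_inner:
  assumes "II K c X g" "1 \<le> c" "finite (K 1)" "domin (K c) (K (Suc c))" "finite (K (Suc c))"
    "sorted_wrt (>) xs" "set xs \<subseteq> K (Suc c)" "X \<subseteq> K (Suc c)" "\<forall>x\<in>set xs. \<forall>y\<in>X. x < y"
  shows "II K c (X \<union> set xs) (foldl (gplace c) g xs)"
  using assms
proof (induction xs arbitrary: X g)
  case Nil
  then show ?case by simp
next
  case (Cons x xs)
  have st: "II K c (insert x X) (gplace c g x)"
    using II_step[OF Cons.prems(1-5)] Cons.prems(7,8,9) by simp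
  have "II K c (insert x X \<union> set xs) (foldl (gplace c) (gplace c g x) xs)"
  proof (rule Cons.IH[OF st Cons.prems(2-5)])
    show "sorted_wrt (>) xs" using Cons.prems(6) by simp
    show "set xs \<subseteq> K (Suc c)" using Cons.prems(7) by simp
    show "insert x X \<subseteq> K (Suc c)" using Cons.prems(7,8) by simp
    show "\<forall>x'\<in>set xs. \<forall>y\<in>insert x X. x' < y" using Cons.prems(6,9) by auto
  qed
  then show ?case by simp
qed

lemma II_next:
  assumes "II K (c - 1) (K c) g" "1 \<le> c"
  shows "II K c {} g"
proof (rule II_intro)
  show "g r \<noteq> [] \<longleftrightarrow> r \<in> K 1" for r using II_ne[OF assms(1)] .
  show "g r \<noteq> [] \<Longrightarrow> g r ! 0 = r" for r using II_hd[OF assms(1)] .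
  show "sorted_wrt (\<lambda>a b. b \<le> a) (g r)" for r using II_sorted[OF assms(1)] .
  show "length (g r) \<le> Suc c" for r using II_len[OF assms(1), of r] assms(2) by simp
  show "{g r ! (c' - 1) | r. c' \<le> length (g r)} = K c'" if "1 \<le> c'" "c' \<le> c" for c'
  proof (cases "c' = c")
    case True
    then show ?thesis using II_X[OF assms(1)] assms(2) by simp
  next
    case False
    then show ?thesis using II_col[OF assms(1) that(1)] that(2) by simp
  qed
  show "{g r ! c | r. Suc c \<le> length (g r)} = {}"
    using II_len[OF assms(1)] assms(2) by (auto simp: not_less_eq_eq[symmetric])
  show "g r ! (c' - 1) \<noteq> g r' ! (c' - 1)"
    if "1 \<le> c'" "r \<noteq> r'" "c' \<le> length (g r)" "c' \<le> length (g r')" for c' r r'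
    using II_dis[OF assms(1) that] .
  show "Suc j < length (g r) \<and> g s ! Suc j < g r ! Suc j"
    if "r < s" "Suc j < length (g s)" "j < length (g r)" "g s ! Suc j \<le> g r ! j" for j s r
    using II_P[OF assms(1) that] .
qed


lemma ASSF_intro:
  assumes "skyline_ok F"
    "\<And>i c. incell F i c \<Longrightarrow> 0 < ent F i c"
    "\<And>i c. 1 \<le> c \<Longrightarrow> incell F i (c + 1) \<Longrightarrow> ent F i (c + 1) \<le> ent F i c"
    "\<And>i i' c. incell F i c \<Longrightarrow> incell F i' c \<Longrightarrow> i \<noteq> i' \<Longrightarrow> ent F i c \<noteq> ent F i' c"
    "\<And>r s c. r < s \<Longrightarrow> 1 \<le> c \<Longrightarrow> slen F s \<le> slen F r \<Longrightarrow> incell F s (c + 1) \<Longrightarrow>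
        inversion_triple (ent F r c) (ent F r (c + 1)) (ent F s (c + 1))"
    "\<And>r s c. r < s \<Longrightarrow> slen F r < slen F s \<Longrightarrow> incell F r c \<Longrightarrow>
        inversion_triple (ent F s c) (ent F s (c + 1)) (ent F r c)"
    "\<And>i. incell F i 1 \<Longrightarrow> ent F i 1 = i"
  shows "F \<in> ASSF"
  unfolding ASSF_def mem_Collect_eq
  apply (intro conjI)
  subgoal using assms(1) by blast
  subgoal using assms(2) by blast
  subgoal using assms(3) by blast
  subgoal using assms(4) by blast
  subgoal using assms(5) by blast
  subgoal using assms(6) by blast
  subgoal using assms(7) by blast
  done

lemma rs_colV_distinct:
  assumes V: "V \<in> revSSYT" and c: "1 \<le> c"
  shows "distinct (colV V c)"
  unfolding colV_map
proof (rule distinct_map[THEN iffD2], rule conjI)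
  show "distinct (filter (\<lambda>r. c \<le> length (V ! r)) [0..<length V])" by simp
  show "inj_on (\<lambda>r. V ! r ! (c - 1)) (set (filter (\<lambda>r. c \<le> length (V ! r)) [0..<length V]))"
  proof (rule inj_onI)
    fix a b assume a: "a \<in> set (filter (\<lambda>r. c \<le> length (V ! r)) [0..<length V])"
      and b: "b \<in> set (filter (\<lambda>r. c \<le> length (V ! r)) [0..<length V])"
      and e: "V ! a ! (c - 1) = V ! b ! (c - 1)"
    show "a = b"
    proof (rule ccontr)
      assume "a \<noteq> b"
      then consider "a < b" | "b < a" by linarith
      moreover have la: "c - 1 < length (V ! a)" "c - 1 < length (V ! b)" "b < length V" "a < length V"
        using a b c by auto
      ultimately show False
      proof cases
        case 1
        then show False using rs_col[OF V 1 la(3,2)] e by simp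
      next
        case 2
        then show False using rs_col[OF V 2 la(4,1)] e by simp
      qed
    qed
  qed
qed

lemma sorted_desc_nth:
  fixes xs :: "nat list"
  shows "sorted_wrt (\<lambda>a b. b \<le> a) xs \<Longrightarrow> i \<le> j \<Longrightarrow> j < length xs \<Longrightarrow> xs ! j \<le> xs ! i"
  by (cases "i = j") (auto simp: sorted_wrt_iff_nth_less)

lemma final_g:
  assumes inv: "II K n (K (Suc n)) g" and top: "\<And>c. Suc n < c \<Longrightarrow> K c = {}"
    and fin1: "finite (K 1)" and pos: "\<And>c x. x \<in> K c \<Longrightarrow> 0 < x"
    and G: "G = map g [1..<Max (insert 0 (K 1)) + 1]"
  shows "G \<in> ASSF \<and> (\<forall>c\<ge>1. kap G c = K c)"
proof -
  define R where "R = Max (insert 0 (K 1))"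
  have lenG: "length G = R" unfolding G R_def by simp
  have inR: "1 \<le> r \<and> r \<le> R" if "r \<in> K 1" for r
    using pos[OF that] that fin1 unfolding R_def by auto
  have gz: "g r = []" if "r \<notin> K 1" for r using II_ne[OF inv, of r] that by simp
  have Gi: "G ! (i - 1) = g i" if "1 \<le> i" "i \<le> R" for i
  proof -
    have l: "i - 1 < length [1..<R+1]" using that by simp
    have "G ! (i - 1) = g ([1..<R+1] ! (i - 1))" unfolding G R_def[symmetric] using l by (simp del: upt_Suc)
    also have "[1..<R+1] ! (i - 1) = i" using that by (simp del: upt_Suc)
    finally show ?thesis .
  qed
  have sl: "slen G i = length (g i)" for i
  proof (cases "1 \<le> i \<and> i \<le> R")
    case True
    then show ?thesis using Gi lenG by (simp add: slen_def)
  next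
    case False
    then have "i \<notin> K 1" using inR by blast
    then have "g i = []" using gz by simp
    moreover have "slen G i = 0" using False lenG unfolding slen_def by auto
    ultimately show ?thesis by simp
  qed
  have inc: "incell G i c \<longleftrightarrow> 1 \<le> c \<and> c \<le> length (g i)" for i c
    unfolding incell_def sl by simp
  have en: "ent G i c = g i ! (c - 1)" if "incell G i c" for i c
  proof -
    have "g i \<noteq> []" using that inc by auto
    then have "1 \<le> i" "i \<le> R" using inR II_ne[OF inv] by blast+
    then show ?thesis using Gi by (simp add: ent_def)
  qed
  have col: "{g r ! (c - 1) | r. c \<le> length (g r)} = K c" if "1 \<le> c" for c
  proof -
    consider "c \<le> n" | "c = Suc n" | "Suc n < c" by linarith
    then show ?thesis
    proof cases
      case 1 then show ?thesis using II_col[OF inv that] by simp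
    next
      case 2 then show ?thesis using II_X[OF inv] by simp
    next
      case 3
      then have "\<not> c \<le> length (g r)" for r using II_len[OF inv, of r] by simp
      then show ?thesis using top[OF 3] by simp
    qed
  qed
  have srt: "sorted_wrt (\<lambda>a b. b \<le> a) (g r)" for r using II_sorted[OF inv] .
  have lemB: "g r ! j < g s ! Suc j" if "r < s" "length (g r) < length (g s)" "j < length (g r)" for r s j
  proof -
    have "\<forall>j. length (g r) - j = d \<longrightarrow> j < length (g r) \<longrightarrow> g r ! j < g s ! Suc j" for d
    proof (induction d)
      case 0
      then show ?case by simp
    next
      case (Suc d)
      show ?case
      proof (intro allI impI)
        fix j assume a: "length (g r) - j = Suc d" "j < length (g r)"
        show "g r ! j < g s ! Suc j"
        proof (rule ccontr)
          assume "\<not> g r ! j < g s ! Suc j"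
          then have le: "g s ! Suc j \<le> g r ! j" by simp
          have "Suc j < length (g s)" using a that(2) by simp
          then have p: "Suc j < length (g r) \<and> g s ! Suc j < g r ! Suc j"
            using II_P[OF inv that(1) _ a(2) le] by simp
          then have ih: "g r ! Suc j < g s ! Suc (Suc j)" using Suc.IH a by simp
          have "g s ! Suc (Suc j) \<le> g s ! Suc j"
            using sorted_desc_nth[OF srt, of "Suc j" "Suc (Suc j)" s] p that(2) by simp
          then show False using p ih by simp
        qed
      qed
    qed
    then show ?thesis using that(3) by blast
  qed
  have A: "G \<in> ASSF"
  proof (rule ASSF_intro)
    show "skyline_ok G"
    proof (cases "K 1 = {}")
      case True
      then have "R = 0" unfolding R_def by simp
      then show ?thesis using lenG unfolding skyline_ok_def by simp
    next
      case False
      then have "R \<in> K 1" unfolding R_def using fin1 by (simp add: Max_insert)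
      then have "g R \<noteq> []" "1 \<le> R" using II_ne[OF inv] inR by auto
      moreover have "last G = G ! (R - 1)" using lenG \<open>1 \<le> R\<close>
        by (metis One_nat_def last_conv_nth list.size(3) not_one_le_zero)
      ultimately show ?thesis using Gi[of R] unfolding skyline_ok_def by simp
    qed
    show "0 < ent G i c" if "incell G i c" for i c
    proof -
      have "ent G i c \<in> K c" using col[of c] inc[of i c] that en by auto
      then show ?thesis using pos by blast
    qed
    show "ent G i (c + 1) \<le> ent G i c" if "1 \<le> c" "incell G i (c + 1)" for i c
    proof -
      have "incell G i c" using that inc by simp
      then show ?thesis using en that inc sorted_desc_nth[OF srt, of "c - 1" c i] by simp
    qed
    show "ent G i c \<noteq> ent G i' c" if "incell G i c" "incell G i' c" "i \<noteq> i'" for i i' c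
      using II_dis[OF inv, of c i i'] that inc en by simp
    show "inversion_triple (ent G r c) (ent G r (c + 1)) (ent G s (c + 1))"
      if a: "r < s" "1 \<le> c" "slen G s \<le> slen G r" "incell G s (c + 1)" for r s c
    proof -
      have ls: "c + 1 \<le> length (g s)" using a inc by simp
      then have lr: "c + 1 \<le> length (g r)" using a(3) sl by simp
      have e: "ent G r c = g r ! (c - 1)" "ent G r (c + 1) = g r ! c" "ent G s (c + 1) = g s ! c"
        using en inc ls lr a(2) by auto
      have dr: "g r ! c \<le> g r ! (c - 1)" using sorted_desc_nth[OF srt, of "c - 1" c r] lr by simp
      show ?thesis
      proof (cases "g s ! c \<le> g r ! (c - 1)")
        case True
        have "Suc (c - 1) < length (g s)" "c - 1 < length (g r)" using ls lr a(2) by auto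
        moreover have "g s ! Suc (c - 1) \<le> g r ! (c - 1)" using True a(2) by simp
        ultimately have "g s ! Suc (c - 1) < g r ! Suc (c - 1)" using II_P[OF inv a(1)] by blast
        then have "g s ! c < g r ! c" using a(2) by simp
        then show ?thesis unfolding inversion_triple_def e using dr by simp
      next
        case False
        then show ?thesis unfolding inversion_triple_def e using dr by simp
      qed
    qed
    show "inversion_triple (ent G s c) (ent G s (c + 1)) (ent G r c)"
      if a: "r < s" "slen G r < slen G s" "incell G r c" for r s c
    proof -
      have lr: "1 \<le> c" "c \<le> length (g r)" using a(3) inc by auto
      have ll: "length (g r) < length (g s)" using a(2) sl by simp
      have e: "ent G s c = g s ! (c - 1)" "ent G s (c + 1) = g s ! c" "ent G r c = g r ! (c - 1)"
        using en inc lr ll by auto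
      have b: "g r ! (c - 1) < g s ! Suc (c - 1)" using lemB[OF a(1) ll, of "c - 1"] lr by simp
      have ds: "g s ! c \<le> g s ! (c - 1)" using sorted_desc_nth[OF srt, of "c - 1" c s] lr ll by simp
      show ?thesis unfolding inversion_triple_def e using b ds lr by simp
    qed
    show "ent G i 1 = i" if "incell G i 1" for i
    proof -
      have "g i \<noteq> []" using that inc by auto
      then show ?thesis using en[OF that] II_hd[OF inv, of i] by simp
    qed
  qed
  have "kap G c = K c" if "1 \<le> c" for c
  proof -
    have "kap G c = {g r ! (c - 1) | r. c \<le> length (g r)}"
    proof (rule set_eqI)
      fix y
      show "y \<in> kap G c \<longleftrightarrow> y \<in> {g r ! (c - 1) | r. c \<le> length (g r)}"
      proof
        assume "y \<in> kap G c"
        then obtain i where "incell G i c" "y = ent G i c" unfolding kap_def by auto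
        then show "y \<in> {g r ! (c - 1) | r. c \<le> length (g r)}" using inc en by auto
      next
        assume "y \<in> {g r ! (c - 1) | r. c \<le> length (g r)}"
        then obtain r where r: "c \<le> length (g r)" "y = g r ! (c - 1)" by auto
        then have "incell G r c" using inc that by simp
        then show "y \<in> kap G c" unfolding kap_def using en r by force
      qed
    qed
    then show ?thesis using col[OF that] by simp
  qed
  then show ?thesis using A by blast
qed


lemma sorted_rev_sort: "distinct xs \<Longrightarrow> sorted_wrt (>) (rev (sort (xs :: nat list)))"
proof -
  assume d: "distinct xs"
  have "sorted_wrt (<) (sort xs)" using d by (simp add: strict_sorted_iff)
  then show ?thesis by (simp add: sorted_wrt_rev)
qed

lemma gamma_outer:
  assumes V: "V \<in> revSSYT" and a: "1 \<le> a" and ab: "a \<le> b"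
    and inv: "II (kap V) (a - 1) (kap V a) g"
  shows "II (kap V) (b - 1) (kap V b) (foldl (\<lambda>g c. foldl (gplace c) g (rev (sort (colV V (c + 1))))) g [a..<b])"
  using ab
proof (induction b rule: dec_induct)
  case base
  then show ?case using inv by simp
next
  case (step b)
  let ?f = "\<lambda>g c. foldl (gplace c) g (rev (sort (colV V (c + 1))))"
  have b1: "1 \<le> b" using step.hyps a by simp
  have st: "II (kap V) b {} (foldl ?f g [a..<b])" using II_next[OF step.IH b1] .
  let ?xs = "rev (sort (colV V (b + 1)))"
  have setxs: "set ?xs = kap V (Suc b)" using colset_kap[of "Suc b" V] by (simp add: colset_def)
  have "II (kap V) b ({} \<union> set ?xs) (foldl (gplace b) (foldl ?f g [a..<b]) ?xs)"
  proof (rule II_inner[OF st b1])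
    show "finite (kap V 1)" by (rule kap_finite)
    show "domin (kap V b) (kap V (Suc b))" using basic_domin[OF rs_basic[OF V] b1] .
    show "finite (kap V (Suc b))" by (rule kap_finite)
    show "sorted_wrt (>) ?xs" using sorted_rev_sort rs_colV_distinct[OF V, of "b + 1"] by simp
    show "set ?xs \<subseteq> kap V (Suc b)" using setxs by simp
  qed auto
  moreover have "[a..<Suc b] = [a..<b] @ [b]" using step.hyps a by simp
  ultimately show ?case using setxs by simp
qed

lemma gamma_main:
  assumes V: "V \<in> revSSYT"
  shows "Gamma V \<in> ASSF \<and> (\<forall>c\<ge>1. kap (Gamma V) c = kap V c)"
proof -
  let ?K = "kap V"
  have s1: "set (colV V 1) = ?K 1" using colset_kap[of 1 V] by (simp add: colset_def)
  define g0 where "g0 = (\<lambda>r. if r \<in> set (colV V 1) then [r] else [])"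
  let ?f = "\<lambda>g c. foldl (gplace c) g (rev (sort (colV V (c + 1))))"
  define w where "w = max 1 (width V)"
  have w1: "1 \<le> w" unfolding w_def by simp
  have upt: "[1..<width V] = [1..<w]" unfolding w_def by (cases "width V") auto
  have init: "II ?K (1 - 1) (?K 1) g0"
  proof (rule II_intro)
    show "g0 r \<noteq> [] \<longleftrightarrow> r \<in> ?K 1" for r unfolding g0_def s1 by simp
    show "g0 r ! 0 = r" if "g0 r \<noteq> []" for r using that unfolding g0_def by (simp split: if_splits)
    show "sorted_wrt (\<lambda>a b. b \<le> a) (g0 r)" for r unfolding g0_def by simp
    show "length (g0 r) \<le> Suc (1 - 1)" for r unfolding g0_def by simp
    show "{g0 r ! (c' - 1) | r. c' \<le> length (g0 r)} = ?K c'" if "1 \<le> c'" "c' \<le> 1 - 1" for c'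
      using that by simp
    show "{g0 r ! (1 - 1) | r. Suc (1 - 1) \<le> length (g0 r)} = ?K 1"
      unfolding g0_def s1 by auto
    show "g0 r ! (c' - 1) \<noteq> g0 r' ! (c' - 1)"
      if "1 \<le> c'" "r \<noteq> r'" "c' \<le> length (g0 r)" "c' \<le> length (g0 r')" for c' r r'
      using that unfolding g0_def by (auto split: if_splits)
    show "Suc j < length (g0 r) \<and> g0 s ! Suc j < g0 r ! Suc j"
      if "r < s" "Suc j < length (g0 s)" "j < length (g0 r)" "g0 s ! Suc j \<le> g0 r ! j" for j s r
      using that unfolding g0_def by (auto split: if_splits)
  qed
  define g where "g = foldl ?f g0 [1..<w]"
  have inv: "II ?K (w - 1) (?K w) g"
    unfolding g_def using gamma_outer[OF V order_refl w1 init] .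
  have GV: "Gamma V = map g [1..<Max (insert 0 (?K 1)) + 1]"
    unfolding Gamma_def g_def g0_def upt[symmetric] s1[symmetric] by (simp add: Let_def)
  have "Gamma V \<in> ASSF \<and> (\<forall>c\<ge>1. kap (Gamma V) c = ?K c)"
  proof (rule final_g[of _ "w - 1" g])
    show "II ?K (w - 1) (?K (Suc (w - 1))) g" using inv w1 by simp
    show "?K c = {}" if "Suc (w - 1) < c" for c
    proof -
      have "width V < c" "1 \<le> c" using that w1 unfolding w_def by auto
      then show ?thesis using rs_colset_empty[OF V] colset_kap by metis
    qed
    show "finite (?K 1)" by (rule kap_finite)
    show "0 < x" if "x \<in> ?K c" for c x using that rs_basic[OF V] unfolding kap_def basic_def by auto
  qed (rule GV)
  then show ?thesis by simp
qed


definition get :: "nat set list \<Rightarrow> nat \<Rightarrow> nat set" where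
  "get cs j = (if j < length cs then cs ! j else {})"

lemma trim_split: "cs = trim cs @ rev (takeWhile (\<lambda>C. C = {}) (rev cs))"
proof -
  have "rev cs = takeWhile (\<lambda>C. C = {}) (rev cs) @ dropWhile (\<lambda>C. C = {}) (rev cs)" by simp
  then have "cs = rev (dropWhile (\<lambda>C. C = {}) (rev cs)) @ rev (takeWhile (\<lambda>C. C = {}) (rev cs))"
    by (metis rev_append rev_rev_ident)
  then show ?thesis unfolding trim_def .
qed

lemma get_trim: "get (trim cs) j = get cs j"
proof -
  let ?T = "rev (takeWhile (\<lambda>C. C = {}) (rev cs))"
  have sp: "cs = trim cs @ ?T" by (rule trim_split)
  have Te: "\<forall>C\<in>set ?T. C = {}" by (auto dest: set_takeWhileD)
  show ?thesis
  proof (cases "j < length (trim cs)")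
    case True
    then show ?thesis unfolding get_def using sp by (metis length_append nth_append trans_less_add1)
  next
    case False
    show ?thesis
    proof (cases "j < length cs")
      case True
      then have "cs ! j = ?T ! (j - length (trim cs))" using False sp by (metis nth_append)
      moreover have "j - length (trim cs) < length ?T" using True False sp
        by (metis add_diff_inverse_nat length_append nat_add_left_cancel_less)
      ultimately have "cs ! j = {}" using Te by (metis nth_mem)
      then show ?thesis unfolding get_def using False True by simp
    next
      case False
      then show ?thesis unfolding get_def using \<open>\<not> j < length (trim cs)\<close> by simp
    qed
  qed
qed

lemma trim_last: "trim cs \<noteq> [] \<Longrightarrow> last (trim cs) \<noteq> {}"
proof -
  assume ne: "trim cs \<noteq> []"
  then have d: "dropWhile (\<lambda>C. C = {}) (rev cs) \<noteq> []" unfolding trim_def by simp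
  have "last (trim cs) = hd (dropWhile (\<lambda>C. C = {}) (rev cs))"
    unfolding trim_def using d by (simp add: last_rev)
  then show ?thesis using hd_dropWhile[OF d] by simp
qed

lemma trim_nil: "trim cs = [] \<longleftrightarrow> (\<forall>j. get cs j = {})"
proof
  assume "trim cs = []"
  then show "\<forall>j. get cs j = {}" using get_trim[of cs] by (simp add: get_def)
next
  assume a: "\<forall>j. get cs j = {}"
  show "trim cs = []"
  proof (rule ccontr)
    assume ne: "trim cs \<noteq> []"
    then have "last (trim cs) \<noteq> {}" by (rule trim_last)
    moreover have "last (trim cs) = get (trim cs) (length (trim cs) - 1)"
      using ne by (simp add: get_def last_conv_nth)
    ultimately show False using a get_trim by simp
  qed
qed

lemma chain_len: "length (chain Cs b) = length Cs"
  by (induction Cs arbitrary: b) (simp_all add: Let_def)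

lemma chain_nth: "i < length Cs \<Longrightarrow>
    chain Cs b ! i = Min {x \<in> Cs ! i. (if i = 0 then b else chain Cs b ! (i - 1)) \<le> x}"
proof (induction Cs arbitrary: b i)
  case Nil then show ?case by simp
next
  case (Cons C Cs)
  show ?case
  proof (cases i)
    case 0 then show ?thesis by (simp add: Let_def)
  next
    case (Suc i')
    then have "i' < length Cs" using Cons.prems by simp
    then show ?thesis using Cons.IH[of i'] Suc by (cases i') (simp_all add: Let_def)
  qed
qed

definition bnd :: "nat list \<Rightarrow> nat \<Rightarrow> nat" where
  "bnd row j = (if Suc j = length row then 0 else row ! Suc j)"

lemma row_nth:
  assumes "row = rev (chain (rev tcs) 0)" "j < length tcs"
  shows "length row = length tcs" "row ! j = Min {x \<in> tcs ! j. bnd row j \<le> x}"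
proof -
  let ?ch = "chain (rev tcs) 0"
  let ?k = "length tcs"
  show lr: "length row = ?k" using assms(1) chain_len[of "rev tcs"] by simp
  have i: "?k - Suc j < length (rev tcs)" using assms(2) by simp
  have rj: "row ! j = ?ch ! (?k - Suc j)" using assms chain_len[of "rev tcs"] by (simp add: rev_nth)
  have rt: "rev tcs ! (?k - Suc j) = tcs ! j" using assms(2) by (simp add: rev_nth)
  have "?ch ! (?k - Suc j) = Min {x \<in> tcs ! j. (if ?k - Suc j = 0 then 0 else ?ch ! (?k - Suc j - 1)) \<le> x}"
    using chain_nth[OF i, of 0] rt by simp
  moreover have "(if ?k - Suc j = 0 then 0 else ?ch ! (?k - Suc j - 1)) = bnd row j"
  proof (cases "Suc j = ?k")
    case True then show ?thesis unfolding bnd_def using lr by simp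
  next
    case False
    then have "Suc j < ?k" using assms(2) by simp
    then have "row ! Suc j = ?ch ! (?k - Suc (Suc j))" using assms chain_len[of "rev tcs"] by (simp add: rev_nth)
    then show ?thesis unfolding bnd_def using lr False \<open>Suc j < ?k\<close> by (simp add: Suc_diff_Suc)
  qed
  ultimately show "row ! j = Min {x \<in> tcs ! j. bnd row j \<le> x}" using rj by simp
qed

lemma row_props:
  assumes row: "row = rev (chain (rev tcs) 0)" and ne: "tcs \<noteq> []" and lst: "last tcs \<noteq> {}"
    and fin: "\<And>j. j < length tcs \<Longrightarrow> finite (tcs ! j)"
    and dm: "\<And>j. Suc j < length tcs \<Longrightarrow> domin (tcs ! j) (tcs ! Suc j)"
    and j: "j < length tcs"
  shows "row ! j \<in> tcs ! j \<and> bnd row j \<le> row ! j \<and> (\<forall>x\<in>tcs ! j. bnd row j \<le> x \<longrightarrow> row ! j \<le> x)"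
proof -
  let ?k = "length tcs"
  have lr: "length row = ?k" using row_nth(1)[OF row j] .
  have main: "\<forall>j. ?k - Suc j = d \<longrightarrow> j < ?k \<longrightarrow> row ! j \<in> tcs ! j \<and> bnd row j \<le> row ! j \<and> (\<forall>x\<in>tcs ! j. bnd row j \<le> x \<longrightarrow> row ! j \<le> x)" for d
  proof (induction d)
    case 0
    show ?case
    proof (intro allI impI)
      fix j assume a: "?k - Suc j = 0" "j < ?k"
      then have jk: "Suc j = ?k" by simp
      have b: "bnd row j = 0" unfolding bnd_def using jk lr by simp
      have "j = length tcs - 1" using jk by simp
      then have "tcs ! j = last tcs" using ne by (simp add: last_conv_nth)
      then have S: "{x \<in> tcs ! j. bnd row j \<le> x} = tcs ! j" "tcs ! j \<noteq> {}" using b lst by auto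
      have eq: "row ! j = Min (tcs ! j)" using row_nth(2)[OF row a(2)] S by simp
      show "row ! j \<in> tcs ! j \<and> bnd row j \<le> row ! j \<and> (\<forall>x\<in>tcs ! j. bnd row j \<le> x \<longrightarrow> row ! j \<le> x)"
        using eq fin[OF a(2)] S(2) b by simp
    qed
  next
    case (Suc d)
    show ?case
    proof (intro allI impI)
      fix j assume a: "?k - Suc j = Suc d" "j < ?k"
      then have jk: "Suc j < ?k" by simp
      have ih: "row ! Suc j \<in> tcs ! Suc j" using Suc.IH a jk by simp
      have b: "bnd row j = row ! Suc j" unfolding bnd_def using jk lr by simp
      have "row ! Suc j \<in> {x \<in> tcs ! Suc j. row ! Suc j \<le> x}" using ih by simp
      moreover have "finite {x \<in> tcs ! Suc j. row ! Suc j \<le> x}" using fin[OF jk] by simp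
      ultimately have "1 \<le> card {x \<in> tcs ! Suc j. row ! Suc j \<le> x}"
        by (metis One_nat_def Suc_leI card_gt_0_iff empty_iff)
      also have "\<dots> \<le> card {x \<in> tcs ! j. row ! Suc j \<le> x}" using dm[OF jk] unfolding domin_def by blast
      finally have "card {x \<in> tcs ! j. row ! Suc j \<le> x} \<noteq> 0" by simp
      then have "{x \<in> tcs ! j. row ! Suc j \<le> x} \<noteq> {}" by (metis card.empty)
      then have "{x \<in> tcs ! j. bnd row j \<le> x} \<noteq> {}" using b by simp
      moreover have "finite {x \<in> tcs ! j. bnd row j \<le> x}" using fin[OF a(2)] by simp
      moreover have eq: "row ! j = Min {x \<in> tcs ! j. bnd row j \<le> x}" using row_nth(2)[OF row a(2)] .
      ultimately show "row ! j \<in> tcs ! j \<and> bnd row j \<le> row ! j \<and> (\<forall>x\<in>tcs ! j. bnd row j \<le> x \<longrightarrow> row ! j \<le> x)"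
        using Min_in[of "{x \<in> tcs ! j. bnd row j \<le> x}"] Min_le[of "{x \<in> tcs ! j. bnd row j \<le> x}"] by auto
    qed
  qed
  show ?thesis using main j by blast
qed


definition rel :: "nat list \<Rightarrow> nat list \<Rightarrow> bool" where
  "rel A B \<longleftrightarrow> length B \<le> length A \<and> (\<forall>j<length B. (Suc j = length A \<or> A ! Suc j \<le> B ! j) \<longrightarrow> A ! j < B ! j)"

definition relS :: "nat list \<Rightarrow> nat set list \<Rightarrow> bool" where
  "relS A cs \<longleftrightarrow> (\<forall>j. length A \<le> j \<longrightarrow> get cs j = {}) \<and>
     (\<forall>j<length A. \<forall>x\<in>get cs j. (Suc j = length A \<or> A ! Suc j \<le> x) \<longrightarrow> A ! j < x)"

definition PI :: "(nat \<Rightarrow> nat set) \<Rightarrow> nat set list \<Rightarrow> (nat \<times> nat list) list \<Rightarrow> bool" where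
  "PI K cs ps \<longleftrightarrow> (\<forall>j. finite (get cs j)) \<and> (\<forall>j. domin (get cs j) (get cs (Suc j))) \<and>
     (\<forall>j. get cs j \<union> {A ! j | a A. (a, A) \<in> set ps \<and> j < length A} = K j) \<and>
     (\<forall>a A j. (a, A) \<in> set ps \<and> j < length A \<longrightarrow> A ! j \<notin> get cs j) \<and>
     distinct (map fst ps) \<and>
     (\<forall>a A. (a, A) \<in> set ps \<longrightarrow> A \<noteq> [] \<and> a = A ! 0 \<and> sorted_wrt (\<lambda>x y. y \<le> x) A) \<and>
     (\<forall>a A b B j. (a, A) \<in> set ps \<and> (b, B) \<in> set ps \<and> a \<noteq> b \<and> j < length A \<and> j < length B \<longrightarrow> A ! j \<noteq> B ! j) \<and>
     (\<forall>a A b B. (a, A) \<in> set ps \<and> (b, B) \<in> set ps \<and> a \<noteq> b \<longrightarrow> rel A B \<or> rel B A) \<and>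
     (\<forall>a A. (a, A) \<in> set ps \<longrightarrow> relS A cs)"

lemma PI_intro:
  assumes "\<And>j. finite (get cs j)" "\<And>j. domin (get cs j) (get cs (Suc j))"
    "\<And>j. get cs j \<union> {A ! j | a A. (a, A) \<in> set ps \<and> j < length A} = K j"
    "\<And>a A j. (a, A) \<in> set ps \<Longrightarrow> j < length A \<Longrightarrow> A ! j \<notin> get cs j"
    "distinct (map fst ps)"
    "\<And>a A. (a, A) \<in> set ps \<Longrightarrow> A \<noteq> [] \<and> a = A ! 0 \<and> sorted_wrt (\<lambda>x y. y \<le> x) A"
    "\<And>a A b B j. (a, A) \<in> set ps \<Longrightarrow> (b, B) \<in> set ps \<Longrightarrow> a \<noteq> b \<Longrightarrow> j < length A \<Longrightarrow> j < length B \<Longrightarrow> A ! j \<noteq> B ! j"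
    "\<And>a A b B. (a, A) \<in> set ps \<Longrightarrow> (b, B) \<in> set ps \<Longrightarrow> a \<noteq> b \<Longrightarrow> rel A B \<or> rel B A"
    "\<And>a A. (a, A) \<in> set ps \<Longrightarrow> relS A cs"
  shows "PI K cs ps"
  unfolding PI_def
  apply (intro conjI)
  subgoal using assms(1) by blast
  subgoal using assms(2) by blast
  subgoal using assms(3) by blast
  subgoal using assms(4) by blast
  subgoal using assms(5) by blast
  subgoal using assms(6) by blast
  subgoal using assms(7) by blast
  subgoal using assms(8) by blast
  subgoal using assms(9) by blast
  done

lemma PI_fin0: "PI K cs ps \<Longrightarrow> (\<forall>j. finite (get cs j))"
  unfolding PI_def by (elim conjE) assumption
lemma PI_dom0: "PI K cs ps \<Longrightarrow> (\<forall>j. domin (get cs j) (get cs (Suc j)))"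
  unfolding PI_def by (elim conjE) assumption
lemma PI_cons0: "PI K cs ps \<Longrightarrow> (\<forall>j. get cs j \<union> {A ! j | a A. (a, A) \<in> set ps \<and> j < length A} = K j)"
  unfolding PI_def by (elim conjE) assumption
lemma PI_disj0: "PI K cs ps \<Longrightarrow> (\<forall>a A j. (a, A) \<in> set ps \<and> j < length A \<longrightarrow> A ! j \<notin> get cs j)"
  unfolding PI_def by (elim conjE) assumption
lemma PI_keys: "PI K cs ps \<Longrightarrow> distinct (map fst ps)"
  unfolding PI_def by (elim conjE) assumption
lemma PI_rows0: "PI K cs ps \<Longrightarrow> (\<forall>a A. (a, A) \<in> set ps \<longrightarrow> A \<noteq> [] \<and> a = A ! 0 \<and> sorted_wrt (\<lambda>x y. y \<le> x) A)"
  unfolding PI_def by (elim conjE) assumption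
lemma PI_dis0: "PI K cs ps \<Longrightarrow> (\<forall>a A b B j. (a, A) \<in> set ps \<and> (b, B) \<in> set ps \<and> a \<noteq> b \<and> j < length A \<and> j < length B \<longrightarrow> A ! j \<noteq> B ! j)"
  unfolding PI_def by (elim conjE) assumption
lemma PI_rel0: "PI K cs ps \<Longrightarrow> (\<forall>a A b B. (a, A) \<in> set ps \<and> (b, B) \<in> set ps \<and> a \<noteq> b \<longrightarrow> rel A B \<or> rel B A)"
  unfolding PI_def by (elim conjE) assumption
lemma PI_relS0: "PI K cs ps \<Longrightarrow> (\<forall>a A. (a, A) \<in> set ps \<longrightarrow> relS A cs)"
  unfolding PI_def by (elim conjE) assumption

lemmas PI_fin = PI_fin0[rule_format]
lemmas PI_dom = PI_dom0[rule_format]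
lemmas PI_cons = PI_cons0[rule_format]
lemmas PI_disj = PI_disj0[rule_format, unfolded conj_imp_eq_imp_imp]
lemmas PI_rows = PI_rows0[rule_format, unfolded conj_imp_eq_imp_imp]
lemmas PI_dis = PI_dis0[rule_format, unfolded conj_imp_eq_imp_imp]
lemmas PI_rel = PI_rel0[rule_format, unfolded conj_imp_eq_imp_imp]
lemmas PI_relS = PI_relS0[rule_format, unfolded conj_imp_eq_imp_imp]

lemma domin_remove:
  assumes fA: "finite A" and fB: "finite B" and dm: "domin A B" and a: "a \<in> A" and b: "b \<in> B"
    and ba: "b \<le> a" and mn: "\<forall>x\<in>A. b \<le> x \<longrightarrow> a \<le> x"
  shows "domin (A - {a}) (B - {b})"
  unfolding domin_def
proof
  fix t
  have dt: "card {x \<in> B. t \<le> x} \<le> card {x \<in> A. t \<le> x}" for t using dm unfolding domin_def by blast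
  consider "t \<le> b" | "a < t" | "b < t" "t \<le> a" by linarith
  then show "card {x \<in> B - {b}. t \<le> x} \<le> card {x \<in> A - {a}. t \<le> x}"
  proof cases
    case 1
    have eB: "{x \<in> B - {b}. t \<le> x} = {x \<in> B. t \<le> x} - {b}" by auto
    have eA: "{x \<in> A - {a}. t \<le> x} = {x \<in> A. t \<le> x} - {a}" by auto
    have "card {x \<in> B - {b}. t \<le> x} = card {x \<in> B. t \<le> x} - 1"
      unfolding eB using b 1 fB by (simp add: card_Diff_singleton)
    moreover have "card {x \<in> A - {a}. t \<le> x} = card {x \<in> A. t \<le> x} - 1"
      unfolding eA using a 1 ba fA by (simp add: card_Diff_singleton)
    ultimately show ?thesis using dt[of t] by simp
  next
    case 2
    have "{x \<in> B - {b}. t \<le> x} = {x \<in> B. t \<le> x}" using 2 ba by auto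
    moreover have "{x \<in> A - {a}. t \<le> x} = {x \<in> A. t \<le> x}" using 2 by auto
    ultimately show ?thesis using dt[of t] by simp
  next
    case 3
    have "{x \<in> B - {b}. t \<le> x} \<subseteq> {x \<in> B. b \<le> x} - {b}" using 3 by auto
    then have "card {x \<in> B - {b}. t \<le> x} \<le> card ({x \<in> B. b \<le> x} - {b})"
      using fB by (intro card_mono) auto
    also have "\<dots> = card {x \<in> B. b \<le> x} - 1" using b fB by (simp add: card_Diff_singleton)
    also have "\<dots> \<le> card {x \<in> A. b \<le> x} - 1" using dt[of b] by simp
    also have "\<dots> = card ({x \<in> A. b \<le> x} - {a})" using a ba fA by (simp add: card_Diff_singleton)
    also have "{x \<in> A. b \<le> x} - {a} = {x \<in> A - {a}. t \<le> x}"
    proof (rule set_eqI)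
      fix x
      show "x \<in> {x \<in> A. b \<le> x} - {a} \<longleftrightarrow> x \<in> {x \<in> A - {a}. t \<le> x}"
        using mn 3 by auto
    qed
    finally show ?thesis .
  qed
qed

lemma domin_empty: "domin A {}"
  unfolding domin_def by simp


lemma relS_mono: "relS A cs \<Longrightarrow> (\<And>j. get cs' j \<subseteq> get cs j) \<Longrightarrow> relS A cs'"
  unfolding relS_def by blast

lemma PI_step:
  assumes inv: "PI K cs ps" and ne: "trim cs \<noteq> []"
  defines "tcs \<equiv> trim cs"
  defines "row \<equiv> rev (chain (rev tcs) 0)"
  defines "cs' \<equiv> map (\<lambda>(C, y). C - {y}) (zip tcs row)"
  shows "PI K cs' ((hd row, row) # ps) \<and> (\<forall>j. get cs' j \<subseteq> get cs j) \<and> row ! 0 \<in> get cs 0 \<and> row ! 0 \<notin> get cs' 0"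
proof -
  define k where "k = length tcs"
  have k1: "1 \<le> k" using ne unfolding k_def tcs_def by (cases "trim cs") auto
  have gt: "get tcs j = get cs j" for j unfolding tcs_def by (rule get_trim)
  have tn: "tcs ! j = get cs j" if "j < k" for j using gt[of j] that unfolding get_def k_def by simp
  have jk0: "get cs j = {}" if "k \<le> j" for j using gt[of j] that unfolding get_def k_def by simp
  have fin: "finite (tcs ! j)" if "j < k" for j using tn[OF that] PI_fin[OF inv] by simp
  have dm: "domin (tcs ! j) (tcs ! Suc j)" if "Suc j < k" for j
    using tn[of j] tn[of "Suc j"] that PI_dom[OF inv, of j] by simp
  have lst: "last tcs \<noteq> {}" unfolding tcs_def using trim_last[OF ne] .
  have tne: "tcs \<noteq> []" unfolding tcs_def using ne .
  have rp: "row ! j \<in> tcs ! j \<and> bnd row j \<le> row ! j \<and> (\<forall>x\<in>tcs ! j. bnd row j \<le> x \<longrightarrow> row ! j \<le> x)"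
    if "j < k" for j
  proof -
    have rd: "row = rev (chain (rev tcs) 0)" unfolding row_def ..
    have f': "finite (tcs ! j)" if "j < length tcs" for j using fin that unfolding k_def by simp
    have d': "domin (tcs ! j) (tcs ! Suc j)" if "Suc j < length tcs" for j using dm that unfolding k_def by simp
    show ?thesis using row_props[OF rd tne lst f' d'] that unfolding k_def by blast
  qed
  have lr: "length row = k"
  proof -
    have rd: "row = rev (chain (rev tcs) 0)" unfolding row_def ..
    show ?thesis using row_nth(1)[OF rd, of 0] k1 tne unfolding k_def by simp
  qed
  have rin: "row ! j \<in> get cs j" if "j < k" for j using rp[OF that] tn[OF that] by simp
  have lcs': "length cs' = k" unfolding cs'_def using lr k_def by simp
  have gc': "get cs' j = (if j < k then get cs j - {row ! j} else {})" for j
  proof (cases "j < k")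
    case True
    then have "cs' ! j = tcs ! j - {row ! j}" unfolding cs'_def using lr k_def by simp
    then show ?thesis unfolding get_def using True lcs' tn[OF True] by (simp add: get_def)
  next
    case False
    then show ?thesis unfolding get_def using lcs' by simp
  qed
  have sub: "get cs' j \<subseteq> get cs j" for j using gc' by auto
  have rne: "row \<noteq> []" using lr k1 by auto
  have hdr: "hd row = row ! 0" using rne by (simp add: hd_conv_nth)
  have bnd_suc: "bnd row j = row ! Suc j" if "Suc j < k" for j unfolding bnd_def using lr that by simp
  have rsorted: "sorted_wrt (\<lambda>x y. y \<le> x) row"
  proof -
    have tr: "transp (\<lambda>x y. (y::nat) \<le> x)" by (auto simp: transp_def)
    show ?thesis unfolding sorted_wrt_iff_nth_Suc_transp[OF tr]
      using rp bnd_suc lr by (metis Suc_lessD)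
  qed
  have rowset: "{A ! j | a A. (a, A) \<in> set ((hd row, row) # ps) \<and> j < length A} =
      (if j < k then {row ! j} else {}) \<union> {A ! j | a A. (a, A) \<in> set ps \<and> j < length A}" for j
    using lr by auto
  have newkey: "(hd row, B) \<notin> set ps" for B
  proof
    assume a: "(hd row, B) \<in> set ps"
    then have "B \<noteq> []" "hd row = B ! 0" using PI_rows[OF inv a] by auto
    then have "B ! 0 \<notin> get cs 0" using PI_disj[OF inv a] by simp
    then show False using rin[of 0] k1 hdr \<open>hd row = B ! 0\<close> by simp
  qed
  have relnew: "rel B row" if "(b, B) \<in> set ps" for b B
  proof -
    have rs: "relS B cs" using PI_relS[OF inv that] .
    have "k - 1 < length B"
    proof (rule ccontr)
      assume "\<not> k - 1 < length B"
      then have "get cs (k - 1) = {}" using rs unfolding relS_def by simp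
      then show False using rin[of "k - 1"] k1 by simp
    qed
    then have "length row \<le> length B" using lr by simp
    moreover have "\<forall>j<length row. (Suc j = length B \<or> B ! Suc j \<le> row ! j) \<longrightarrow> B ! j < row ! j"
    proof (intro allI impI)
      fix j assume j: "j < length row" "Suc j = length B \<or> B ! Suc j \<le> row ! j"
      have "j < length B" using j(1) \<open>length row \<le> length B\<close> by simp
      moreover have "row ! j \<in> get cs j" using rin j lr by simp
      ultimately show "B ! j < row ! j" using rs j(2) unfolding relS_def by blast
    qed
    ultimately show ?thesis unfolding rel_def by blast
  qed
  have "PI K cs' ((hd row, row) # ps)"
  proof (rule PI_intro)
    show "finite (get cs' j)" for j using sub[of j] PI_fin[OF inv, of j] finite_subset by blast
    show "domin (get cs' j) (get cs' (Suc j))" for j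
    proof (cases "Suc j < k")
      case True
      have "domin (get cs j - {row ! j}) (get cs (Suc j) - {row ! Suc j})"
      proof (rule domin_remove)
        show "finite (get cs j)" "finite (get cs (Suc j))" using PI_fin[OF inv] by auto
        show "domin (get cs j) (get cs (Suc j))" using PI_dom[OF inv] .
        show "row ! j \<in> get cs j" "row ! Suc j \<in> get cs (Suc j)" using rin True by auto
        show "row ! Suc j \<le> row ! j" using rp[of j] bnd_suc[OF True] True by simp
        show "\<forall>x\<in>get cs j. row ! Suc j \<le> x \<longrightarrow> row ! j \<le> x"
          using rp[of j] bnd_suc[OF True] True tn[of j] by simp
      qed
      then show ?thesis using gc' True by simp
    next
      case False
      then show ?thesis using gc'[of "Suc j"] by (simp add: domin_empty)
    qed
    show "get cs' j \<union> {A ! j | a A. (a, A) \<in> set ((hd row, row) # ps) \<and> j < length A} = K j" for j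
    proof (cases "j < k")
      case True
      have "get cs' j \<union> {A ! j | a A. (a, A) \<in> set ((hd row, row) # ps) \<and> j < length A}
          = (get cs j - {row ! j}) \<union> {row ! j} \<union> {A ! j | a A. (a, A) \<in> set ps \<and> j < length A}"
        using gc' rowset True by auto
      also have "(get cs j - {row ! j}) \<union> {row ! j} = get cs j" using rin[OF True] by auto
      finally show ?thesis using PI_cons[OF inv] by simp
    next
      case False
      then show ?thesis using gc' rowset PI_cons[OF inv, of j] jk0[of j] by simp
    qed
    show "A ! j \<notin> get cs' j" if "(a, A) \<in> set ((hd row, row) # ps)" "j < length A" for a A j
    proof (cases "(a, A) = (hd row, row)")
      case True
      then show ?thesis using gc' that lr by auto
    next
      case False
      then have "(a, A) \<in> set ps" using that by auto
      then show ?thesis using PI_disj[OF inv _ that(2)] sub by blast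
    qed
    show "distinct (map fst ((hd row, row) # ps))"
      using PI_keys[OF inv] newkey by auto
    show "A \<noteq> [] \<and> a = A ! 0 \<and> sorted_wrt (\<lambda>x y. y \<le> x) A" if "(a, A) \<in> set ((hd row, row) # ps)" for a A
    proof (cases "(a, A) = (hd row, row)")
      case True
      then show ?thesis using rne hdr rsorted by simp
    next
      case False
      then have "(a, A) \<in> set ps" using that by auto
      then show ?thesis using PI_rows[OF inv] by blast
    qed
    show "A ! j \<noteq> B ! j" if a: "(a, A) \<in> set ((hd row, row) # ps)" "(b, B) \<in> set ((hd row, row) # ps)"
      "a \<noteq> b" "j < length A" "j < length B" for a A b B j
    proof (cases "(a, A) = (hd row, row)")
      case True
      then have "(b, B) \<in> set ps" using a by auto
      then have "B ! j \<notin> get cs j" using PI_disj[OF inv _ a(5)] by blast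
      moreover have "A ! j \<in> get cs j" using True a(4) rin lr by simp
      ultimately show ?thesis by auto
    next
      case False
      then have aA: "(a, A) \<in> set ps" using a by auto
      show ?thesis
      proof (cases "(b, B) = (hd row, row)")
        case True
        have "A ! j \<notin> get cs j" using PI_disj[OF inv aA a(4)] .
        moreover have "B ! j \<in> get cs j" using True a(5) rin lr by simp
        ultimately show ?thesis by auto
      next
        case False
        then have "(b, B) \<in> set ps" using a by auto
        then show ?thesis using PI_dis[OF inv aA _ a(3,4,5)] by blast
      qed
    qed
    show "rel A B \<or> rel B A" if a: "(a, A) \<in> set ((hd row, row) # ps)" "(b, B) \<in> set ((hd row, row) # ps)"
      "a \<noteq> b" for a A b B
    proof (cases "(a, A) = (hd row, row)")
      case True
      then have "(b, B) \<in> set ps" using a by auto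
      then show ?thesis using relnew True by auto
    next
      case False
      then have aA: "(a, A) \<in> set ps" using a by auto
      show ?thesis
      proof (cases "(b, B) = (hd row, row)")
        case True
        then show ?thesis using relnew[OF aA] by auto
      next
        case False
        then have "(b, B) \<in> set ps" using a by auto
        then show ?thesis using PI_rel[OF inv aA _ a(3)] by blast
      qed
    qed
    show "relS A cs'" if a: "(a, A) \<in> set ((hd row, row) # ps)" for a A
    proof (cases "(a, A) = (hd row, row)")
      case True
      then have AA: "A = row" by simp
      have p1: "\<forall>j. length row \<le> j \<longrightarrow> get cs' j = {}" using gc' lr by simp
      have p2: "\<forall>j<length row. \<forall>x\<in>get cs' j. (Suc j = length row \<or> row ! Suc j \<le> x) \<longrightarrow> row ! j < x"
      proof (intro allI impI ballI)
        fix j x assume j: "j < length row" and x: "x \<in> get cs' j" and cnd: "Suc j = length row \<or> row ! Suc j \<le> x"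
        have jk: "j < k" using j lr by simp
        have xin: "x \<in> tcs ! j" "x \<noteq> row ! j" using x gc' jk tn[OF jk] by auto
        have "bnd row j \<le> x" using cnd unfolding bnd_def by auto
        then have "row ! j \<le> x" using rp[OF jk] xin by blast
        then show "row ! j < x" using xin by simp
      qed
      show ?thesis unfolding AA relS_def using p1 p2 by blast
    next
      case False
      then have "(a, A) \<in> set ps" using a by auto
      then show ?thesis using relS_mono[OF PI_relS[OF inv] sub] by blast
    qed
  qed
  moreover have "row ! 0 \<in> get cs 0" using rin k1 by simp
  moreover have "row ! 0 \<notin> get cs' 0" using gc' k1 by simp
  ultimately show ?thesis using sub by blast
qed

lemma psi_step_eq:
  assumes "trim cs \<noteq> []"
  shows "psi_step (cs, ps) = (map (\<lambda>(C, y). C - {y}) (zip (trim cs) (rev (chain (rev (trim cs)) 0))),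
     (hd (rev (chain (rev (trim cs)) 0)), rev (chain (rev (trim cs)) 0)) # ps)"
  using assms unfolding psi_step_def by (simp add: Let_def)

lemma psi_step_nil:
  assumes "trim cs = []"
  shows "psi_step (cs, ps) = ([], ps)"
  using assms unfolding psi_step_def by (simp add: Let_def)


lemma PI_get_cong:
  assumes "PI K cs ps" "\<And>j. get cs j = get cs' j"
  shows "PI K cs' ps"
proof -
  have e: "get cs = get cs'" using assms(2) by (rule ext)
  show ?thesis using assms(1) unfolding PI_def relS_def e .
qed

definition mu :: "nat \<Rightarrow> nat set list \<Rightarrow> nat" where
  "mu N cs = (\<Sum>j<N. card (get cs j))"

lemma PI_sub: "PI K cs ps \<Longrightarrow> get cs j \<subseteq> K j"
  using PI_cons[of K cs ps j] by blast

lemma psi_iter: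
  assumes inv0: "PI K cs0 ps0" and top: "\<And>j. N \<le> j \<Longrightarrow> K j = {}"
  shows "PI K (fst ((psi_step ^^ m) (cs0, ps0))) (snd ((psi_step ^^ m) (cs0, ps0))) \<and>
    (trim (fst ((psi_step ^^ m) (cs0, ps0))) = [] \<or> mu N (fst ((psi_step ^^ m) (cs0, ps0))) + m \<le> mu N cs0)"
proof (induction m)
  case 0
  then show ?case using inv0 by simp
next
  case (Suc m)
  define cs where "cs = fst ((psi_step ^^ m) (cs0, ps0))"
  define ps where "ps = snd ((psi_step ^^ m) (cs0, ps0))"
  have st: "(psi_step ^^ m) (cs0, ps0) = (cs, ps)" unfolding cs_def ps_def by simp
  have inv: "PI K cs ps" and bd: "trim cs = [] \<or> mu N cs + m \<le> mu N cs0" using Suc.IH unfolding cs_def ps_def by auto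
  have eq: "(psi_step ^^ Suc m) (cs0, ps0) = psi_step (cs, ps)" using st by simp
  show ?case
  proof (cases "trim cs = []")
    case True
    have "PI K [] ps" using PI_get_cong[OF inv] True trim_nil[of cs] by (simp add: get_def)
    then show ?thesis using eq psi_step_nil[OF True] by (simp add: trim_def)
  next
    case False
    let ?row = "rev (chain (rev (trim cs)) 0)"
    let ?cs' = "map (\<lambda>(C, y). C - {y}) (zip (trim cs) ?row)"
    have ps: "psi_step (cs, ps) = (?cs', (hd ?row, ?row) # ps)" using psi_step_eq[OF False] .
    note S = PI_step[OF inv False]
    have N1: "0 < N"
    proof (rule ccontr)
      assume "\<not> 0 < N"
      then have "get cs j = {}" for j using PI_sub[OF inv, of j] top[of j] by simp
      then show False using False trim_nil by simp
    qed
    have "mu N ?cs' < mu N cs"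
      unfolding mu_def
    proof (rule sum_strict_mono_ex1)
      show "finite {..<N}" by simp
      show "\<forall>x\<in>{..<N}. card (get ?cs' x) \<le> card (get cs x)"
        using S PI_fin[OF inv] by (meson card_mono)
      have "get ?cs' 0 \<subset> get cs 0" using S by blast
      then have "card (get ?cs' 0) < card (get cs 0)" using PI_fin[OF inv, of 0] psubset_card_mono by blast
      then show "\<exists>a\<in>{..<N}. card (get ?cs' a) < card (get cs a)" using N1 by blast
    qed
    then have "mu N ?cs' + Suc m \<le> mu N cs0" using bd False by simp
    then show ?thesis using S eq ps by simp
  qed
qed

lemma colV_Cons: "colV (x # V) c = (if c \<le> length x then [x ! (c - 1)] else []) @ colV V c"
proof -
  have "[0..<length (x # V)] = 0 # map Suc [0..<length V]"
    by (simp add: upt_conv_Cons map_Suc_upt del: upt_Suc)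
  then show ?thesis unfolding colV_map by (simp add: comp_def filter_map)
qed

lemma sum_min_ind: "(\<Sum>j<N. (if j < L then 1 else 0 :: nat)) = min N L"
  by (induction N) auto

lemma sum_colV: "(\<Sum>j<N. length (colV V (Suc j))) \<le> sum_list (map length V)"
proof (induction V)
  case Nil
  then show ?case by (simp add: colV_def)
next
  case (Cons x V)
  have "(\<Sum>j<N. length (colV (x # V) (Suc j))) = (\<Sum>j<N. (if j < length x then 1 else 0)) + (\<Sum>j<N. length (colV V (Suc j)))"
  proof -
    have "length (if Suc j \<le> length x then [x ! (Suc j - 1)] else []) = (if j < length x then 1 else 0)" for j
      by simp
    then show ?thesis unfolding colV_Cons by (simp add: sum.distrib)
  qed
  also have "\<dots> \<le> length x + sum_list (map length V)" using Cons.IH sum_min_ind[where N=N and L="length x"] by simp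
  finally show ?case by simp
qed

lemma rel_L1:
  assumes r: "rel A B" and s: "sorted_wrt (\<lambda>x y. y \<le> x) B" and j: "j < length B" and lt: "A ! j < B ! j"
  shows "A ! 0 < B ! 0"
  using j lt
proof (induction j)
  case 0 then show ?case by simp
next
  case (Suc j)
  have "B ! Suc j \<le> B ! j" using s Suc.prems(1) by (auto simp: sorted_wrt_iff_nth_less)
  then have "A ! Suc j \<le> B ! j" using Suc.prems(2) by simp
  then have "A ! j < B ! j" using r Suc.prems(1) unfolding rel_def by auto
  then show ?case using Suc.IH Suc.prems(1) by simp
qed

lemma qKT1_intro:
  assumes "skyline_ok F"
    "\<And>i c. incell F i c \<Longrightarrow> 0 < ent F i c \<and> ent F i c \<le> i"
    "\<And>i c. 1 \<le> c \<Longrightarrow> incell F i (c + 1) \<Longrightarrow> ent F i (c + 1) \<le> ent F i c"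
    "\<And>i i' c. incell F i c \<Longrightarrow> incell F i' c \<Longrightarrow> i \<noteq> i' \<Longrightarrow> ent F i c \<noteq> ent F i' c"
    "\<And>i i'. incell F i 1 \<Longrightarrow> incell F i' 1 \<Longrightarrow> i < i' \<Longrightarrow> ent F i 1 < ent F i' 1"
    "\<And>r s c. r < s \<Longrightarrow> incell F r c \<Longrightarrow> incell F s c \<Longrightarrow> ent F s c < ent F r c \<Longrightarrow>
        incell F r (c + 1) \<and> ent F s c < ent F r (c + 1)"
    "\<And>r s c. r < s \<Longrightarrow> slen F r < slen F s \<Longrightarrow> incell F r c \<Longrightarrow> incell F s (c + 1) \<Longrightarrow>
        ent F r c < ent F s (c + 1)"
    "\<And>i. incell F i 1 \<Longrightarrow> ent F i 1 = i"
  shows "F \<in> qKT1"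
  unfolding qKT1_def mem_Collect_eq
  apply (intro conjI)
  subgoal using assms(1) by blast
  subgoal using assms(2) by blast
  subgoal using assms(3) by blast
  subgoal using assms(4) by blast
  subgoal using assms(5) by blast
  subgoal using assms(6) by blast
  subgoal using assms(7) by blast
  subgoal using assms(8) by blast
  done


lemma final_ps:
  assumes inv: "PI K cs ps" and emp: "\<And>j. get cs j = {}" and pos: "\<And>j x. x \<in> K j \<Longrightarrow> 0 < x"
  shows "sky_of_pairs ps \<in> qKT1 \<and> (\<forall>c\<ge>1. kap (sky_of_pairs ps) c = K (c - 1))"
proof -
  define F where "F = sky_of_pairs ps"
  define rowF where "rowF i = (case map_of ps i of None \<Rightarrow> [] | Some r \<Rightarrow> r)" for i
  define M where "M = Max (insert 0 (fst ` set ps))"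
  have cons: "{A ! j | a A. (a, A) \<in> set ps \<and> j < length A} = K j" for j
    using PI_cons[OF inv, of j] emp[of j] by simp
  have rows: "A \<noteq> [] \<and> a = A ! 0 \<and> sorted_wrt (\<lambda>x y. y \<le> x) A" if "(a, A) \<in> set ps" for a A
    using PI_rows[OF inv that] .
  have dk: "distinct (map fst ps)" using PI_keys[OF inv] .
  have entK: "A ! j \<in> K j" if "(a, A) \<in> set ps" "j < length A" for a A j
    using cons[of j] that by blast
  have keypos: "0 < a" if "(a, A) \<in> set ps" for a A
  proof -
    have "A ! 0 \<in> K 0" using entK[OF that] rows[OF that] by simp
    then show ?thesis using pos rows[OF that] by simp
  qed
  have rin: "rowF a = A" if "(a, A) \<in> set ps" for a A
    unfolding rowF_def using map_of_is_SomeI[OF dk that] by simp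
  have rne: "(i, rowF i) \<in> set ps" if "rowF i \<noteq> []" for i
  proof (cases "map_of ps i")
    case None then show ?thesis using that unfolding rowF_def by simp
  next
    case (Some r) then show ?thesis unfolding rowF_def using map_of_SomeD by simp
  qed
  have finK: "finite (insert 0 (fst ` set ps))" by simp
  have keyM: "1 \<le> a \<and> a \<le> M" if "(a, A) \<in> set ps" for a A
  proof -
    have "a \<in> insert 0 (fst ` set ps)" using that by force
    then have "a \<le> M" unfolding M_def using finK by simp
    then show ?thesis using keypos[OF that] by simp
  qed
  have Fdef: "F = map rowF [1..<M + 1]" unfolding F_def sky_of_pairs_def rowF_def M_def by simp
  have lenF: "length F = M" unfolding Fdef by simp
  have Fi: "F ! (i - 1) = rowF i" if "1 \<le> i" "i \<le> M" for i
  proof -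
    have l: "i - 1 < length [1..<M+1]" using that by simp
    have "F ! (i - 1) = rowF ([1..<M+1] ! (i - 1))" unfolding Fdef using l by (simp del: upt_Suc)
    also have "[1..<M+1] ! (i - 1) = i" using that by (simp del: upt_Suc)
    finally show ?thesis .
  qed
  have sl: "slen F i = length (rowF i)" for i
  proof (cases "1 \<le> i \<and> i \<le> M")
    case True
    then show ?thesis using Fi lenF by (simp add: slen_def)
  next
    case False
    have "rowF i = []" using False rne keyM by blast
    moreover have "slen F i = 0" using False lenF unfolding slen_def by auto
    ultimately show ?thesis by simp
  qed
  have inc: "incell F i c \<longleftrightarrow> 1 \<le> c \<and> c \<le> length (rowF i)" for i c
    unfolding incell_def sl by simp
  have incP: "(i, rowF i) \<in> set ps" if "incell F i c" for i c using rne that inc by force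
  have en: "ent F i c = rowF i ! (c - 1)" if "incell F i c" for i c
  proof -
    have "1 \<le> i" "i \<le> M" using keyM[OF incP[OF that]] by auto
    then show ?thesis using Fi by (simp add: ent_def)
  qed
  have r0: "rowF i ! 0 = i" if "incell F i c" for i c using rows[OF incP[OF that]] by simp
  have srt: "sorted_wrt (\<lambda>x y. y \<le> x) (rowF i)" if "incell F i c" for i c using rows[OF incP[OF that]] by simp
  have relF: "rel (rowF r) (rowF s) \<or> rel (rowF s) (rowF r)" if "incell F r c" "incell F s c'" "r \<noteq> s" for r s c c'
    using PI_rel[OF inv incP[OF that(1)] incP[OF that(2)] that(3)] .
  have FQ: "F \<in> qKT1"
  proof (rule qKT1_intro)
    show "skyline_ok F"
    proof (cases "M = 0")
      case True
      then show ?thesis using lenF unfolding skyline_ok_def by simp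
    next
      case False
      have "M \<in> insert 0 (fst ` set ps)" unfolding M_def using finK by (rule Max_in) simp
      then obtain A where A: "(M, A) \<in> set ps" using False by auto
      then have "rowF M \<noteq> []" using rin rows by auto
      moreover have "F \<noteq> []" using lenF False by auto
      then have "last F = F ! (M - 1)" using lenF by (simp add: last_conv_nth)
      ultimately show ?thesis using Fi[of M] False unfolding skyline_ok_def by simp
    qed
    show "0 < ent F i c \<and> ent F i c \<le> i" if "incell F i c" for i c
    proof -
      have c: "1 \<le> c" "c \<le> length (rowF i)" using that inc by auto
      have "rowF i ! (c - 1) \<in> K (c - 1)" using entK[OF incP[OF that]] c by simp
      then have "0 < rowF i ! (c - 1)" using pos by blast
      moreover have "rowF i ! (c - 1) \<le> rowF i ! 0"
        using srt[OF that] c by (cases "c = 1") (auto simp: sorted_wrt_iff_nth_less)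
      ultimately show ?thesis using en[OF that] r0[OF that] by simp
    qed
    show "ent F i (c + 1) \<le> ent F i c" if "1 \<le> c" "incell F i (c + 1)" for i c
    proof -
      have i2: "incell F i c" using that inc by simp
      have "rowF i ! c \<le> rowF i ! (c - 1)"
        using srt[OF i2] that inc by (auto simp: sorted_wrt_iff_nth_less)
      then show ?thesis using en[OF that(2)] en[OF i2] by simp
    qed
    show "ent F i c \<noteq> ent F i' c" if "incell F i c" "incell F i' c" "i \<noteq> i'" for i i' c
    proof -
      have "c - 1 < length (rowF i)" "c - 1 < length (rowF i')" using that inc by auto
      then show ?thesis using PI_dis[OF inv incP[OF that(1)] incP[OF that(2)] that(3)] en that by simp
    qed
    show "ent F i 1 < ent F i' 1" if "incell F i 1" "incell F i' 1" "i < i'" for i i'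
      using en r0 that by simp
    show "incell F r (c + 1) \<and> ent F s c < ent F r (c + 1)"
      if a: "r < s" "incell F r c" "incell F s c" "ent F s c < ent F r c" for r s c
    proof -
      let ?R = "rowF r" and ?S = "rowF s"
      have c: "1 \<le> c" "c \<le> length ?R" "c \<le> length ?S" using a inc by auto
      have lt: "?S ! (c - 1) < ?R ! (c - 1)" using a(4) en a(2,3) by simp
      have "rel ?R ?S \<or> rel ?S ?R" using relF[OF a(2,3)] a(1) by simp
      then show ?thesis
      proof
        assume rl: "rel ?S ?R"
        have "?S ! 0 < ?R ! 0" using rel_L1[OF rl srt[OF a(2)] _ lt] c by simp
        then show ?thesis using r0 a by simp
      next
        assume rl: "rel ?R ?S"
        have "c - 1 < length ?S" using c by simp
        then have "(Suc (c - 1) = length ?R \<or> ?R ! Suc (c - 1) \<le> ?S ! (c - 1)) \<longrightarrow> ?R ! (c - 1) < ?S ! (c - 1)"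
          using rl unfolding rel_def by blast
        then have "Suc (c - 1) \<noteq> length ?R" "\<not> ?R ! Suc (c - 1) \<le> ?S ! (c - 1)" using lt by auto
        then have "c < length ?R" "?S ! (c - 1) < ?R ! c" using c by auto
        moreover have "incell F r (c + 1)" using calculation(1) inc c by simp
        ultimately show ?thesis using en a(3) by simp
      qed
    qed
    show "ent F r c < ent F s (c + 1)"
      if a: "r < s" "slen F r < slen F s" "incell F r c" "incell F s (c + 1)" for r s c
    proof -
      let ?R = "rowF r" and ?S = "rowF s"
      have c: "1 \<le> c" "c \<le> length ?R" "c + 1 \<le> length ?S" using a inc by auto
      have ll: "length ?R < length ?S" using a(2) sl by simp
      have "rel ?R ?S \<or> rel ?S ?R" using relF[OF a(3,4)] a(1) by simp
      then have rl: "rel ?S ?R" using ll unfolding rel_def by auto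
      show ?thesis
      proof (rule ccontr)
        assume "\<not> ?thesis"
        then have le: "?S ! c \<le> ?R ! (c - 1)" using en a(3,4) by simp
        have "c - 1 < length ?R" using c by simp
        moreover have "?S ! Suc (c - 1) \<le> ?R ! (c - 1)" using le c by simp
        ultimately have "?S ! (c - 1) < ?R ! (c - 1)" using rl unfolding rel_def by blast
        moreover have "c - 1 < length ?R" using c by simp
        ultimately have "?S ! 0 < ?R ! 0" using rel_L1[OF rl srt[OF a(3)]] by blast
        then show False using r0 a by simp
      qed
    qed
    show "ent F i 1 = i" if "incell F i 1" for i using en r0 that by simp
  qed
  have "kap F c = K (c - 1)" if c: "1 \<le> c" for c
  proof (rule set_eqI)
    fix y
    show "y \<in> kap F c \<longleftrightarrow> y \<in> K (c - 1)"
    proof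
      assume "y \<in> kap F c"
      then obtain i where i: "incell F i c" "y = ent F i c" unfolding kap_def by auto
      then show "y \<in> K (c - 1)" using entK[OF incP[OF i(1)]] en inc by auto
    next
      assume "y \<in> K (c - 1)"
      then have "y \<in> {A ! (c - 1) | a A. (a, A) \<in> set ps \<and> c - 1 < length A}" unfolding cons .
      then obtain a A where aA: "(a, A) \<in> set ps" "c - 1 < length A" "y = A ! (c - 1)" by blast
      then have "rowF a = A" using rin by simp
      then have "incell F a c" "ent F a c = y" using inc en aA c by auto
      then show "y \<in> kap F c" unfolding kap_def by blast
    qed
  qed
  then show ?thesis using FQ F_def by simp
qed

lemma psi_main:
  assumes V: "V \<in> revSSYT"
  shows "psi V \<in> qKT1 \<and> (\<forall>c\<ge>1. kap (psi V) c = kap V c)"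
proof -
  define K where "K j = kap V (Suc j)" for j
  define N where "N = width V"
  define cs0 where "cs0 = map (colset V) [1..<width V + 1]"
  define n where "n = sum_list (map length V)"
  have g0: "get cs0 j = K j" for j
  proof (cases "j < N")
    case True
    have "cs0 ! j = colset V (Suc j)" unfolding cs0_def using True N_def by (simp del: upt_Suc)
    moreover have "length cs0 = N" unfolding cs0_def N_def by simp
    ultimately show ?thesis unfolding get_def K_def using True colset_kap[of "Suc j" V] by simp
  next
    case False
    then have "kap V (Suc j) = {}" using rs_colset_empty[OF V, of "Suc j"] colset_kap[of "Suc j" V] N_def by simp
    then show ?thesis unfolding get_def cs0_def K_def N_def using False N_def by simp
  qed
  have top: "K j = {}" if "N \<le> j" for j
    using rs_colset_empty[OF V, of "Suc j"] colset_kap[of "Suc j" V] that unfolding K_def N_def by simp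
  have inv0: "PI K cs0 []"
  proof (rule PI_intro)
    show "finite (get cs0 j)" for j using g0 kap_finite unfolding K_def by simp
    show "domin (get cs0 j) (get cs0 (Suc j))" for j
      using g0 basic_domin[OF rs_basic[OF V], of "Suc j"] unfolding K_def by simp
    show "get cs0 j \<union> {A ! j | a A. (a, A) \<in> set [] \<and> j < length A} = K j" for j using g0 by simp
  qed auto
  have mu0: "mu N cs0 \<le> n"
  proof -
    have "mu N cs0 = (\<Sum>j<N. card (colset V (Suc j)))"
      unfolding mu_def using g0 colset_kap unfolding K_def by simp
    also have "\<dots> \<le> (\<Sum>j<N. length (colV V (Suc j)))"
      by (rule sum_mono) (simp add: colset_def card_length)
    also have "\<dots> \<le> n" unfolding n_def by (rule sum_colV)
    finally show ?thesis .
  qed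
  define st where "st = (psi_step ^^ n) (cs0, [])"
  have it: "PI K (fst st) (snd st) \<and> (trim (fst st) = [] \<or> mu N (fst st) + n \<le> mu N cs0)"
    unfolding st_def using psi_iter[OF inv0 top] by blast
  have emp: "get (fst st) j = {}" for j
  proof -
    have "trim (fst st) = []"
    proof (rule ccontr)
      assume ne: "trim (fst st) \<noteq> []"
      then have "mu N (fst st) = 0" using it mu0 by simp
      then have "\<forall>j<N. card (get (fst st) j) = 0" unfolding mu_def by simp
      then have "get (fst st) j = {}" for j
      proof (cases "j < N")
        case True
        then show ?thesis using \<open>\<forall>j<N. card (get (fst st) j) = 0\<close> PI_fin[of K "fst st" "snd st" j] it by auto
      next
        case False
        then show ?thesis using PI_sub[of K "fst st" "snd st" j] it top by auto
      qed
      then show False using ne trim_nil by simp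
    qed
    then show ?thesis using trim_nil by simp
  qed
  have pos: "0 < x" if "x \<in> K j" for j x using that rs_basic[OF V] unfolding K_def kap_def basic_def by auto
  have psiV: "psi V = sky_of_pairs (snd st)" unfolding psi_def st_def cs0_def n_def by simp
  have "sky_of_pairs (snd st) \<in> qKT1 \<and> (\<forall>c\<ge>1. kap (sky_of_pairs (snd st)) c = K (c - 1))"
    using final_ps[of K "fst st" "snd st"] it emp pos by blast
  then show ?thesis using psiV unfolding K_def by simp
qed


lemma bij_gen:
  assumes mp: "\<And>V. V \<in> revSSYT \<Longrightarrow> f V \<in> T \<and> (\<forall>c\<ge>1. kap (f V) c = kap V c)"
    and uq: "\<And>F G. F \<in> T \<Longrightarrow> G \<in> T \<Longrightarrow> (\<And>c. 1 \<le> c \<Longrightarrow> kap F c = kap G c) \<Longrightarrow> F = G"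
    and bs: "\<And>F. F \<in> T \<Longrightarrow> basic F"
  shows "bij_betw f {V \<in> revSSYT. particle_highest V} {F \<in> T. particle_highest F}"
  unfolding bij_betw_def
proof
  show "inj_on f {V \<in> revSSYT. particle_highest V}"
  proof (rule inj_onI)
    fix V W assume V: "V \<in> {V \<in> revSSYT. particle_highest V}" and W: "W \<in> {V \<in> revSSYT. particle_highest V}"
      and e: "f V = f W"
    have "kap V c = kap W c" if "1 \<le> c" for c
      using mp[of V] mp[of W] V W e that by auto
    then show "V = W" using rs_unique V W by blast
  qed
  show "f ` {V \<in> revSSYT. particle_highest V} = {F \<in> T. particle_highest F}"
  proof
    show "f ` {V \<in> revSSYT. particle_highest V} \<subseteq> {F \<in> T. particle_highest F}"
    proof
      fix F assume "F \<in> f ` {V \<in> revSSYT. particle_highest V}"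
      then obtain V where V: "V \<in> revSSYT" "particle_highest V" "F = f V" by auto
      have "particle_highest (f V) = particle_highest V" using mp[OF V(1)] by (intro ph_cong) auto
      then show "F \<in> {F \<in> T. particle_highest F}" using mp[OF V(1)] V by simp
    qed
    show "{F \<in> T. particle_highest F} \<subseteq> f ` {V \<in> revSSYT. particle_highest V}"
    proof
      fix F assume F: "F \<in> {F \<in> T. particle_highest F}"
      obtain V where V: "V \<in> revSSYT" "\<forall>c\<ge>1. kap V c = kap F c" using basic_exists_rs[OF bs] F by blast
      have "f V = F" using uq[of "f V" F] mp[OF V(1)] V F by auto
      moreover have "particle_highest V = particle_highest F" using V(2) by (intro ph_cong) auto
      ultimately show "F \<in> f ` {V \<in> revSSYT. particle_highest V}" using V F by auto
    qed
  qed
qed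

theorem theorem5p10:
  shows "bij_betw psi HrevSSYT HqKT1 \<and> bij_betw Gamma HrevSSYT HSSF"
proof
  show "bij_betw psi HrevSSYT HqKT1"
    unfolding HrevSSYT_def HqKT1_def
  proof (rule bij_gen)
    show "psi V \<in> qKT1 \<and> (\<forall>c\<ge>1. kap (psi V) c = kap V c)" if "V \<in> revSSYT" for V
      using psi_main[OF that] .
    show "F = G" if "F \<in> qKT1" "G \<in> qKT1" "\<And>c. 1 \<le> c \<Longrightarrow> kap F c = kap G c" for F G
      using qkt_unique[OF that] .
    show "basic F" if "F \<in> qKT1" for F using qk_basic[OF qkt_qk[OF that]] .
  qed
  show "bij_betw Gamma HrevSSYT HSSF"
    unfolding HrevSSYT_def HSSF_def
  proof (rule bij_gen)
    show "Gamma V \<in> ASSF \<and> (\<forall>c\<ge>1. kap (Gamma V) c = kap V c)" if "V \<in> revSSYT" for V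
      using gamma_main[OF that] .
    show "F = G" if "F \<in> ASSF" "G \<in> ASSF" "\<And>c. 1 \<le> c \<Longrightarrow> kap F c = kap G c" for F G
      using assf_unique[OF that] .
    show "basic F" if "F \<in> ASSF" for F using assf_basic[OF that] .
  qed
qed

end
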